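(* Let $d\ge1$ and $0\le k\le d$, and let $W=V^{\otimes d}\otimes_{\mathbb C\mathfrak S_d}\mathbb C\mathfrak S_{d+k}\subset\overline T_d(V)$, with $\mathbb C\mathfrak S_{d+k}$ acting on $W$ by right multiplication (identified with its image in $\mathrm{End}_{\mathbb C}(W)$). Let $\mathcal A_d^k\subset\mathrm{End}_{\mathbb C}(W)$ be the linear span of all operators $L(w_d)\cdots L(w_1)L(\sigma)L(v_1^\ast)\cdots L(v_d^\ast)$ (restricted to $W$) with $w_1,\dots,w_d\in V$, $\sigma\in\mathfrak S_{d+k}$, $v_1^\ast,\dots,v_d^\ast\in V^\ast$. Then $$\mathcal A_d^k=\mathrm{End}_{\mathbb C\mathfrak S_{d+k}}(W)\qquad\text{and}\qquad \mathrm{End}_{\mathcal A_d^k}(W)=\mathbb C\mathfrak S_{d+k}.$$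
   Context: Let $m,n\ge 1$ and $V=\mathbb C^{m|n}$ with standard basis $e_1,\dots,e_{m+n}$, where $|e_i|=0$ for $i\le m$ and $|e_i|=1$ for $i>m$; let $e_1^\ast,\dots,e_{m+n}^\ast$ be the dual basis with $|e_i^\ast|=|e_i|$. All vectors are homogeneous. A pure tensor $v_d\otimes\cdots\otimes v_1\in V^{\otimes d}$ is written $v_d\cdots v_1$ (factors indexed decreasingly from left to right). $\mathfrak S_d$ is the symmetric group on $\{1,\dots,d\}$, $s_i=(i\ i+1)$, $\mathfrak S_\infty=\bigcup_d\mathfrak S_d$, and for $k\ge1$ the group homomorphism $\sigma\mapsto\sigma^{\uparrow k}$ of $\mathfrak S_\infty$ is defined by $s_i^{\uparrow k}=s_{i+k}$. The right action of $\mathfrak S_d$ on $V^{\otimes d}$ is $(v_d\cdots v_1).s_i=(-1)^{|v_i||v_{i+1}|}v_d\cdots v_{i+2}v_iv_{i+1}v_{i-1}\cdots v_1$ (the factors in positions $i,i+1$ are swapped). Set $\overline T_d(V)=V^{\otimes d}\otimes_{\mathbb C\mathfrak S_d}\mathbb C\mathfrak S_\infty$ (so $\overline T_0(V)=\mathbb C\mathfrak S_\infty$) and $\overline T(V)=\bigoplus_{d\ge0}\overline T_d(V)$, with the associative product $(u_k\cdots u_1\otimes\tau)\cdot(v_d\cdots v_1\otimes\sigma)=u_k\cdots u_1v_d\cdots v_1\otimes\tau^{\uparrow d}\sigma$. For $\varphi\in\overline T(V)$, $L(\varphi)$ denotes left multiplication by $\varphi$; in particular $L(v)$ for $v\in V$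 (identified with $v\otimes 1\in\overline T_1(V)$) and $L(\sigma)$ for $\sigma\in\mathfrak S_\infty$ (identified with $1\otimes\sigma\in\overline T_0(V)$). For homogeneous $v^\ast\in V^\ast$, $L(v^\ast)$ is the linear map with $L(v^\ast)=0$ on $\overline T_0(V)$ and $$L(v^\ast)(v_d\cdots v_1\otimes\sigma)=\sum_{k=1}^d(-1)^{|v^\ast|(|v_d|+\cdots+|v_{k+1}|)}\langle v^\ast,v_k\rangle\, v_d\cdots\widehat{v_k}\cdots v_1\otimes s_{d-1}s_{d-2}\cdots s_k\,\sigma,$$ where $\widehat{v_k}$ means omission and the product $s_{d-1}\cdots s_k$ is $1$ for $k=d$; $L$ is extended linearly to all of $V^\ast$. For a subset $A$ of $\mathrm{End}_{\mathbb C}(W)$, $\mathrm{End}_A(W)$ denotes its commutant. *)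

theory Defs
  imports Complex_Main "HOL-Combinatorics.Permutations"
begin

text \<open>
V = C^{m|n} has basis e_1..e_{m+n}; e_a is odd iff m < a.
A pure tensor e_{a_d} ... e_{a_1} (x) sigma of the free space
V^{(x)j} (x) C S_infinity is encoded by the index (xs, sigma) where
xs = [a_d, ..., a_1] (head = leftmost factor, so the factor in position i
is xs ! (length xs - i)) and sigma :: nat => nat is a finitary permutation
of {1,2,...}.  Vectors of the free space are functions idx => complex
(finitely supported where it matters); the relevant quotients
(tensor product over C S_d) are handled by working modulo the subspace of
relations.
\<close>

type_synonym idx = "nat list \<times> (nat \<Rightarrow> nat)"
type_synonym vec = "idx \<Rightarrow> complex"

definition delta :: "idx \<Rightarrow> vec" where
  "delta x = (\<lambda>y. if y = x then 1 else 0)"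

definition lin_ext :: "(idx \<Rightarrow> vec) \<Rightarrow> vec \<Rightarrow> vec" where
  "lin_ext g f = (\<lambda>y. \<Sum>x\<in>{x. f x \<noteq> 0}. f x * g x y)"

definition cspan :: "vec set \<Rightarrow> vec set" where
  "cspan B = {f. \<exists>S c. finite S \<and> S \<subseteq> B \<and> f = (\<lambda>y. \<Sum>b\<in>S. c b * b y)}"

definition cspan_op :: "(vec \<Rightarrow> vec) set \<Rightarrow> (vec \<Rightarrow> vec) set" where
  "cspan_op G = {T. \<exists>S c. finite S \<and> S \<subseteq> G \<and> T = (\<lambda>f y. \<Sum>g\<in>S. c g * g f y)}"

definition is_odd :: "nat \<Rightarrow> nat \<Rightarrow> bool" where
  "is_odd m a \<longleftrightarrow> m < a"

definition s :: "nat \<Rightarrow> nat \<Rightarrow> nat" where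
  "s i = (\<lambda>j. if j = i then Suc i else if j = Suc i then i else j)"

definition shift :: "nat \<Rightarrow> (nat \<Rightarrow> nat) \<Rightarrow> nat \<Rightarrow> nat" where
  "shift k \<sigma> = (\<lambda>i. if i \<le> k then i else \<sigma> (i - k) + k)"

fun cyc :: "nat \<Rightarrow> nat \<Rightarrow> nat \<Rightarrow> nat" where
  "cyc k 0 = id"
| "cyc k (Suc j) = (if k \<le> j then s j \<circ> cyc k j else id)"

definition L_vec :: "nat \<Rightarrow> nat \<Rightarrow> (nat \<Rightarrow> complex) \<Rightarrow> vec \<Rightarrow> vec" where
  "L_vec m n c = lin_ext (\<lambda>(xs, \<sigma>) y. \<Sum>a\<in>{1..m+n}. c a * delta (a # xs, \<sigma>) y)"

definition L_perm :: "(nat \<Rightarrow> nat) \<Rightarrow> vec \<Rightarrow> vec" where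
  "L_perm \<rho> = lin_ext (\<lambda>(xs, \<sigma>). delta (xs, shift (length xs) \<rho> \<circ> \<sigma>))"

text \<open>L(e_a^*) on a basis tensor (position k factor is xs ! (length xs - k))\<close>
definition L_dual_basis :: "nat \<Rightarrow> nat \<Rightarrow> idx \<Rightarrow> vec" where
  "L_dual_basis m a = (\<lambda>(xs, \<sigma>) y. \<Sum>k\<in>{1..length xs}.
      (if xs ! (length xs - k) = a then
         (-1) ^ (if is_odd m a then length (filter (is_odd m) (take (length xs - k) xs)) else 0)
         * delta (take (length xs - k) xs @ drop (length xs - k + 1) xs,
                  cyc k (length xs) \<circ> \<sigma>) y
       else 0))"

definition L_dual :: "nat \<Rightarrow> nat \<Rightarrow> (nat \<Rightarrow> complex) \<Rightarrow> vec \<Rightarrow> vec" where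
  "L_dual m n c = lin_ext (\<lambda>x y. \<Sum>a\<in>{1..m+n}. c a * L_dual_basis m a x y)"

definition W_idx :: "nat \<Rightarrow> nat \<Rightarrow> nat \<Rightarrow> nat \<Rightarrow> idx set" where
  "W_idx m n d k = {(xs, \<sigma>). length xs = d \<and> set xs \<subseteq> {1..m+n} \<and> \<sigma> permutes {1..d+k}}"

definition W_free :: "nat \<Rightarrow> nat \<Rightarrow> nat \<Rightarrow> nat \<Rightarrow> vec set" where
  "W_free m n d k = {f. \<forall>y. y \<notin> W_idx m n d k \<longrightarrow> f y = 0}"

definition rel :: "nat \<Rightarrow> nat \<Rightarrow> idx \<Rightarrow> vec" where
  "rel m i = (\<lambda>(xs, \<sigma>) y.
     (let p = length xs - i - 1 in
       (if is_odd m (xs ! p) \<and> is_odd m (xs ! Suc p) then -1 else 1)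
         * delta (xs[p := xs ! Suc p, Suc p := xs ! p], \<sigma>) y
       - delta (xs, s i \<circ> \<sigma>) y))"

definition W_rel :: "nat \<Rightarrow> nat \<Rightarrow> nat \<Rightarrow> nat \<Rightarrow> vec set" where
  "W_rel m n d k = cspan {rel m i x | i x. x \<in> W_idx m n d k \<and> 1 \<le> i \<and> i < d}"

text \<open>W = W_free / W_rel.  Linear endomorphisms of W are represented by
  linear maps of W_free preserving W_rel; two represent the same
  endomorphism iff they agree modulo W_rel.\<close>
definition W_endo :: "nat \<Rightarrow> nat \<Rightarrow> nat \<Rightarrow> nat \<Rightarrow> (vec \<Rightarrow> vec) \<Rightarrow> bool" where
  "W_endo m n d k T \<longleftrightarrow>
     (\<forall>f\<in>W_free m n d k. T f \<in> W_free m n d k) \<and>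
     (\<forall>f\<in>W_free m n d k. \<forall>g\<in>W_free m n d k. T (\<lambda>y. f y + g y) = (\<lambda>y. T f y + T g y)) \<and>
     (\<forall>f\<in>W_free m n d k. \<forall>c. T (\<lambda>y. c * f y) = (\<lambda>y. c * T f y)) \<and>
     (\<forall>r\<in>W_rel m n d k. T r \<in> W_rel m n d k)"

definition W_eq :: "nat \<Rightarrow> nat \<Rightarrow> nat \<Rightarrow> nat \<Rightarrow> (vec \<Rightarrow> vec) \<Rightarrow> (vec \<Rightarrow> vec) \<Rightarrow> bool" where
  "W_eq m n d k T U \<longleftrightarrow> (\<forall>f\<in>W_free m n d k. (\<lambda>y. T f y - U f y) \<in> W_rel m n d k)"

definition W_commute :: "nat \<Rightarrow> nat \<Rightarrow> nat \<Rightarrow> nat \<Rightarrow> (vec \<Rightarrow> vec) \<Rightarrow> (vec \<Rightarrow> vec) \<Rightarrow> bool" where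
  "W_commute m n d k T U \<longleftrightarrow> W_eq m n d k (T \<circ> U) (U \<circ> T)"

definition R_mult :: "nat \<Rightarrow> nat \<Rightarrow> ((nat \<Rightarrow> nat) \<Rightarrow> complex) \<Rightarrow> vec \<Rightarrow> vec" where
  "R_mult d k c = lin_ext (\<lambda>(xs, \<sigma>) y. \<Sum>\<rho>\<in>{\<rho>. \<rho> permutes {1..d+k}}. c \<rho> * delta (xs, \<sigma> \<circ> \<rho>) y)"

definition A_gens :: "nat \<Rightarrow> nat \<Rightarrow> nat \<Rightarrow> nat \<Rightarrow> (vec \<Rightarrow> vec) set" where
  "A_gens m n d k = {foldr (\<circ>)
        (map (\<lambda>j. L_vec m n (w j)) (rev [1..<d+1]) @ [L_perm \<rho>] @ map (\<lambda>j. L_dual m n (v j)) [1..<d+1])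
        id
      | w \<rho> v. \<rho> permutes {1..d+k}}"

definition A_alg :: "nat \<Rightarrow> nat \<Rightarrow> nat \<Rightarrow> nat \<Rightarrow> (vec \<Rightarrow> vec) set" where
  "A_alg m n d k = cspan_op (A_gens m n d k)"

end

theory Submission
  imports Defs "HOL-Library.Function_Algebras"
begin

definition fsupp :: "vec \<Rightarrow> bool" where "fsupp f \<longleftrightarrow> finite {y. f y \<noteq> 0}"

definition linop :: "(vec \<Rightarrow> vec) \<Rightarrow> bool" where
 "linop T \<longleftrightarrow> (\<forall>f. fsupp f \<longrightarrow> fsupp (T f))
   \<and> (\<forall>f g. fsupp f \<longrightarrow> fsupp g \<longrightarrow> T (\<lambda>y. f y + g y) = (\<lambda>y. T f y + T g y))
   \<and> (\<forall>f c. fsupp f \<longrightarrow> T (\<lambda>y. c * f y) = (\<lambda>y. c * T f y))"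

lemma fsupp_delta[simp]: "fsupp (delta x)"
  unfolding fsupp_def delta_def by (rule finite_subset[of _ "{x}"]) auto

lemma fsupp_zero[simp]: "fsupp (\<lambda>y. 0)"
  unfolding fsupp_def by simp

lemma fsupp_add[simp]: "fsupp f \<Longrightarrow> fsupp g \<Longrightarrow> fsupp (\<lambda>y. f y + g y)"
  unfolding fsupp_def by (rule finite_subset[of _ "{y. f y \<noteq> 0} \<union> {y. g y \<noteq> 0}"]) auto

lemma fsupp_diff[simp]: "fsupp f \<Longrightarrow> fsupp g \<Longrightarrow> fsupp (\<lambda>y. f y - g y)"
  unfolding fsupp_def by (rule finite_subset[of _ "{y. f y \<noteq> 0} \<union> {y. g y \<noteq> 0}"]) auto

lemma fsupp_neg[simp]: "fsupp f \<Longrightarrow> fsupp (\<lambda>y. - f y)"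
  unfolding fsupp_def by simp

lemma fsupp_scale[simp]: "fsupp f \<Longrightarrow> fsupp (\<lambda>y. c * f y)"
  unfolding fsupp_def by (rule finite_subset[of _ "{y. f y \<noteq> 0}"]) auto

lemma fsupp_sum[simp]: "finite S \<Longrightarrow> (\<And>i. i \<in> S \<Longrightarrow> fsupp (h i)) \<Longrightarrow> fsupp (\<lambda>y. \<Sum>i\<in>S. h i y)"
proof (induction S rule: finite_induct)
  case empty then show ?case by simp
next
  case (insert x F)
  have "fsupp (\<lambda>y. h x y + (\<Sum>i\<in>F. h i y))"
    using insert by (intro fsupp_add) auto
  then show ?case using insert by simp
qed

lemma fsupp_subset: "finite S \<Longrightarrow> (\<And>y. y \<notin> S \<Longrightarrow> f y = 0) \<Longrightarrow> fsupp f"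
  unfolding fsupp_def by (rule finite_subset[of _ S]) auto

lemma linopD1: "linop T \<Longrightarrow> fsupp f \<Longrightarrow> fsupp (T f)" unfolding linop_def by blast
lemma linopD2: "linop T \<Longrightarrow> fsupp f \<Longrightarrow> fsupp g \<Longrightarrow> T (\<lambda>y. f y + g y) = (\<lambda>y. T f y + T g y)"
  unfolding linop_def by blast
lemma linopD3: "linop T \<Longrightarrow> fsupp f \<Longrightarrow> T (\<lambda>y. c * f y) = (\<lambda>y. c * T f y)"
  unfolding linop_def by blast

lemma linop_zero: assumes "linop T" shows "T (\<lambda>y. 0) = (\<lambda>y. 0)"
  using linopD3[OF assms fsupp_zero, of 0] by simp

lemma linop_sum:
  assumes "linop T" "finite S" "\<And>i. i \<in> S \<Longrightarrow> fsupp (h i)"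
  shows "T (\<lambda>y. \<Sum>i\<in>S. c i * h i y) = (\<lambda>y. \<Sum>i\<in>S. c i * T (h i) y)"
  using assms(2,3)
proof (induction S rule: finite_induct)
  case empty then show ?case using linop_zero[OF assms(1)] by simp
next
  case (insert x F)
  have "T (\<lambda>y. \<Sum>i\<in>insert x F. c i * h i y) = T (\<lambda>y. c x * h x y + (\<Sum>i\<in>F. c i * h i y))"
    using insert by simp
  also have "\<dots> = (\<lambda>y. T (\<lambda>y. c x * h x y) y + T (\<lambda>y. \<Sum>i\<in>F. c i * h i y) y)"
    using insert by (intro linopD2[OF assms(1)]) auto
  also have "\<dots> = (\<lambda>y. \<Sum>i\<in>insert x F. c i * T (h i) y)"
    using insert linopD3[OF assms(1), of "h x" "c x"] by simp
  finally show ?case .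
qed

lemma linop_sum':
  assumes "linop T" "finite S" "\<And>i. i \<in> S \<Longrightarrow> fsupp (h i)"
  shows "T (\<lambda>y. \<Sum>i\<in>S. h i y) = (\<lambda>y. \<Sum>i\<in>S. T (h i) y)"
  using linop_sum[OF assms, where c="\<lambda>_. 1"] by simp

lemma linop_diff:
  assumes "linop T" "fsupp f" "fsupp g"
  shows "T (\<lambda>y. f y - g y) = (\<lambda>y. T f y - T g y)"
proof -
  have e: "(\<lambda>y. f y - g y) = (\<lambda>y. f y + (\<lambda>y. (-1) * g y) y)" by simp
  have "T (\<lambda>y. f y + (\<lambda>y. (-1) * g y) y) = (\<lambda>y. T f y + T (\<lambda>y. (-1) * g y) y)"
    using assms by (intro linopD2) auto
  also have "T (\<lambda>y. (-1) * g y) = (\<lambda>y. (-1) * T g y)" using assms by (intro linopD3) auto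
  finally show ?thesis unfolding e by simp
qed

lemma fsupp_decomp:
  assumes "finite S" "\<And>y. y \<notin> S \<Longrightarrow> f y = 0"
  shows "f = (\<lambda>y. \<Sum>x\<in>S. f x * delta x y)"
proof
  fix y
  have "(\<Sum>x\<in>S. f x * delta x y) = (\<Sum>x\<in>S. if x = y then f y else 0)"
    by (rule sum.cong) (auto simp: delta_def)
  also have "\<dots> = f y" using assms by (auto simp: sum.delta')
  finally show "f y = (\<Sum>x\<in>S. f x * delta x y)" by simp
qed

lemma linop_ext:
  assumes "linop T" "linop U" "finite S" "\<And>y. y \<notin> S \<Longrightarrow> f y = 0"
    "\<And>x. x \<in> S \<Longrightarrow> T (delta x) = U (delta x)"
  shows "T f = U f"
proof -
  have e: "f = (\<lambda>y. \<Sum>x\<in>S. f x * delta x y)" by (rule fsupp_decomp[OF assms(3,4)])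
  have "T f = T (\<lambda>y. \<Sum>x\<in>S. f x * delta x y)" by (rule arg_cong[OF e])
  also have "\<dots> = (\<lambda>y. \<Sum>x\<in>S. f x * T (delta x) y)" using linop_sum[OF assms(1,3)] by simp
  also have "\<dots> = (\<lambda>y. \<Sum>x\<in>S. f x * U (delta x) y)" using assms(5) by simp
  also have "\<dots> = U (\<lambda>y. \<Sum>x\<in>S. f x * delta x y)" using linop_sum[OF assms(2,3)] by simp
  also have "\<dots> = U f" by (rule arg_cong[OF e[symmetric]])
  finally show ?thesis .
qed

lemma linop_ext':
  assumes "linop T" "linop U" "fsupp f" "\<And>x. T (delta x) = U (delta x)"
  shows "T f = U f"
proof -
  have "finite {y. f y \<noteq> 0}" using assms(3) unfolding fsupp_def .
  then show ?thesis by (rule linop_ext[OF assms(1,2)]) (auto simp: assms(4))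
qed

lemma linop_id[simp]: "linop id" unfolding linop_def by simp
lemma linop_id'[simp]: "linop (\<lambda>f. f)" unfolding linop_def by simp

lemma linop_comp[intro]: "linop T \<Longrightarrow> linop U \<Longrightarrow> linop (T \<circ> U)"
  unfolding linop_def by auto

lemma linop_comb:
  assumes "finite S" "\<And>j. j \<in> S \<Longrightarrow> linop (T j)"
  shows "linop (\<lambda>f y. \<Sum>j\<in>S. c j * T j f y)"
  unfolding linop_def
proof (intro conjI allI impI)
  fix f assume "fsupp f" then show "fsupp (\<lambda>y. \<Sum>j\<in>S. c j * T j f y)"
    using assms by (intro fsupp_sum fsupp_scale) (auto dest: linopD1)
next
  fix f g assume "fsupp f" "fsupp g"
  then show "(\<lambda>y. \<Sum>j\<in>S. c j * T j (\<lambda>y. f y + g y) y) =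
    (\<lambda>y. (\<Sum>j\<in>S. c j * T j f y) + (\<Sum>j\<in>S. c j * T j g y))"
    using assms by (auto simp: linopD2 ring_distribs sum.distrib)
next
  fix f c' assume "fsupp f"
  then show "(\<lambda>y. \<Sum>j\<in>S. c j * T j (\<lambda>y. c' * f y) y) = (\<lambda>y. c' * (\<Sum>j\<in>S. c j * T j f y))"
    using assms by (auto simp: linopD3 sum_distrib_left mult_ac)
qed

lemma lin_ext_eq:
  assumes "finite S" "\<And>y. y \<notin> S \<Longrightarrow> f y = 0"
  shows "lin_ext g f = (\<lambda>y. \<Sum>x\<in>S. f x * g x y)"
proof
  fix y
  have "{x. f x \<noteq> 0} \<subseteq> S" using assms by auto
  then show "lin_ext g f y = (\<Sum>x\<in>S. f x * g x y)"
    unfolding lin_ext_def using assms by (intro sum.mono_neutral_left) auto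
qed

lemma lin_ext_eq':
  assumes "fsupp f"
  shows "lin_ext g f = (\<lambda>y. \<Sum>x\<in>{x. f x \<noteq> 0}. f x * g x y)"
  using assms unfolding lin_ext_def by simp

lemma lin_ext_delta[simp]: "lin_ext g (delta x) = g x"
proof -
  have "lin_ext g (delta x) = (\<lambda>y. \<Sum>x'\<in>{x}. delta x x' * g x' y)"
    by (rule lin_ext_eq) (auto simp: delta_def)
  then show ?thesis by (simp add: delta_def)
qed

lemma linop_lin_ext:
  assumes "\<And>x. fsupp (g x)"
  shows "linop (lin_ext g)"
  unfolding linop_def
proof (intro conjI allI impI)
  fix f assume f: "fsupp f"
  then show "fsupp (lin_ext g f)"
    using assms by (auto simp: lin_ext_eq' fsupp_def[of f])
next
  fix f h assume f: "fsupp f" and h: "fsupp h"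
  let ?S = "{x. f x \<noteq> 0} \<union> {x. h x \<noteq> 0}"
  have fin: "finite ?S" using f h by (auto simp: fsupp_def)
  have "lin_ext g (\<lambda>y. f y + h y) = (\<lambda>y. \<Sum>x\<in>?S. (f x + h x) * g x y)"
    by (rule lin_ext_eq[OF fin]) auto
  moreover have "lin_ext g f = (\<lambda>y. \<Sum>x\<in>?S. f x * g x y)"
    by (rule lin_ext_eq[OF fin]) auto
  moreover have "lin_ext g h = (\<lambda>y. \<Sum>x\<in>?S. h x * g x y)"
    by (rule lin_ext_eq[OF fin]) auto
  ultimately show "lin_ext g (\<lambda>y. f y + h y) = (\<lambda>y. lin_ext g f y + lin_ext g h y)"
    by (simp add: ring_distribs sum.distrib)
next
  fix f c assume f: "fsupp f"
  let ?S = "{x. f x \<noteq> 0}"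
  have fin: "finite ?S" using f by (auto simp: fsupp_def)
  have "lin_ext g (\<lambda>y. c * f y) = (\<lambda>y. \<Sum>x\<in>?S. (c * f x) * g x y)"
    by (rule lin_ext_eq[OF fin]) auto
  moreover have "lin_ext g f = (\<lambda>y. \<Sum>x\<in>?S. f x * g x y)"
    by (rule lin_ext_eq[OF fin]) auto
  ultimately show "lin_ext g (\<lambda>y. c * f y) = (\<lambda>y. c * lin_ext g f y)"
    by (simp add: sum_distrib_left mult_ac)
qed

lemma cspan_zero[simp]: "(\<lambda>y. 0) \<in> cspan B"
  unfolding cspan_def by (rule CollectI, rule exI[of _ "{}"]) auto

lemma cspan_base: "b \<in> B \<Longrightarrow> b \<in> cspan B"
  unfolding cspan_def by (rule CollectI, rule exI[of _ "{b}"], rule exI[of _ "\<lambda>_. 1"]) auto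

lemma cspan_add:
  assumes "f \<in> cspan B" "g \<in> cspan B" shows "(\<lambda>y. f y + g y) \<in> cspan B"
proof -
  obtain S1 c1 where 1: "finite S1" "S1 \<subseteq> B" "f = (\<lambda>y. \<Sum>b\<in>S1. c1 b * b y)"
    using assms(1) unfolding cspan_def by blast
  obtain S2 c2 where 2: "finite S2" "S2 \<subseteq> B" "g = (\<lambda>y. \<Sum>b\<in>S2. c2 b * b y)"
    using assms(2) unfolding cspan_def by blast
  let ?c = "\<lambda>b. (if b \<in> S1 then c1 b else 0) + (if b \<in> S2 then c2 b else 0)"
  have "(\<lambda>y. f y + g y) = (\<lambda>y. \<Sum>b\<in>S1 \<union> S2. ?c b * b y)"
  proof
    fix y
    have a: "(\<Sum>b\<in>S1 \<union> S2. (if b \<in> S1 then c1 b else 0) * b y) = (\<Sum>b\<in>S1. c1 b * b y)"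
      using 1 2 by (intro sum.mono_neutral_cong_right) auto
    have b: "(\<Sum>b\<in>S1 \<union> S2. (if b \<in> S2 then c2 b else 0) * b y) = (\<Sum>b\<in>S2. c2 b * b y)"
      using 1 2 by (intro sum.mono_neutral_cong_right) auto
    show "f y + g y = (\<Sum>b\<in>S1 \<union> S2. ?c b * b y)"
      using a b 1 2 by (simp add: ring_distribs sum.distrib)
  qed
  then show ?thesis unfolding cspan_def using 1(1,2) 2(1,2)
    by (intro CollectI exI[of _ "S1 \<union> S2"] exI[of _ ?c] conjI) auto
qed

lemma cspan_scale:
  assumes "f \<in> cspan B" shows "(\<lambda>y. c * f y) \<in> cspan B"
proof -
  obtain S1 c1 where 1: "finite S1" "S1 \<subseteq> B" "f = (\<lambda>y. \<Sum>b\<in>S1. c1 b * b y)"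
    using assms(1) unfolding cspan_def by blast
  have "(\<lambda>y. c * f y) = (\<lambda>y. \<Sum>b\<in>S1. (c * c1 b) * b y)"
    using 1 by (auto simp: sum_distrib_left mult_ac)
  then show ?thesis unfolding cspan_def using 1(1,2)
    by (intro CollectI exI[of _ "S1"] exI[of _ "\<lambda>b. c * c1 b"] conjI) auto
qed

lemma cspan_diff:
  assumes "f \<in> cspan B" "g \<in> cspan B" shows "(\<lambda>y. f y - g y) \<in> cspan B"
  using cspan_add[OF assms(1) cspan_scale[OF assms(2), of "-1"]] by simp

lemma cspan_sum:
  assumes "finite S" "\<And>i. i \<in> S \<Longrightarrow> h i \<in> cspan B"
  shows "(\<lambda>y. \<Sum>i\<in>S. h i y) \<in> cspan B"
  using assms
proof (induction S rule: finite_induct)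
  case empty then show ?case by simp
next
  case (insert x F)
  then show ?case using cspan_add[of "h x" B "\<lambda>y. \<Sum>i\<in>F. h i y"] by simp
qed

lemma cspan_fsupp:
  assumes "\<And>b. b \<in> B \<Longrightarrow> fsupp b" "f \<in> cspan B" shows "fsupp f"
proof -
  obtain S1 c1 where 1: "finite S1" "S1 \<subseteq> B" "f = (\<lambda>y. \<Sum>b\<in>S1. c1 b * b y)"
    using assms(2) unfolding cspan_def by blast
  then show ?thesis using assms(1) by (auto intro!: fsupp_sum fsupp_scale)
qed

lemma cspan_linop:
  assumes "linop T" "\<And>b. b \<in> B \<Longrightarrow> fsupp b" "\<And>b. b \<in> B \<Longrightarrow> T b \<in> cspan C" "f \<in> cspan B"
  shows "T f \<in> cspan C"
proof -
  obtain S1 c1 where 1: "finite S1" "S1 \<subseteq> B" "f = (\<lambda>y. \<Sum>b\<in>S1. c1 b * b y)"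
    using assms(4) unfolding cspan_def by blast
  have "T f = (\<lambda>y. \<Sum>b\<in>S1. c1 b * T b y)"
    using 1 assms(2) by (simp add: linop_sum[OF assms(1)] subset_iff)
  also have "\<dots> \<in> cspan C"
    using 1 assms(3) by (intro cspan_sum cspan_scale) auto
  finally show ?thesis .
qed


definition Al :: "nat \<Rightarrow> nat \<Rightarrow> nat set" where "Al m n = {1..m+n}"
definition Pm :: "nat \<Rightarrow> (nat \<Rightarrow> nat) set" where "Pm N = {\<rho>. \<rho> permutes {1..N}}"

definition Idx :: "nat \<Rightarrow> nat \<Rightarrow> nat \<Rightarrow> nat \<Rightarrow> idx set" where
  "Idx m n N L = {(xs, \<sigma>). length xs = L \<and> set xs \<subseteq> {1..m+n} \<and> \<sigma> permutes {1..N}}"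

definition FL :: "nat \<Rightarrow> nat \<Rightarrow> nat \<Rightarrow> nat \<Rightarrow> vec set" where
  "FL m n N L = {f. \<forall>y. y \<notin> Idx m n N L \<longrightarrow> f y = 0}"

definition RelL :: "nat \<Rightarrow> nat \<Rightarrow> nat \<Rightarrow> nat \<Rightarrow> vec set" where
  "RelL m n N L = cspan {rel m i x | i x. x \<in> Idx m n N L \<and> 1 \<le> i \<and> i < L}"

lemma W_idx_Idx: "W_idx m n d k = Idx m n (d+k) d"
  unfolding W_idx_def Idx_def by simp
lemma W_free_FL: "W_free m n d k = FL m n (d+k) d"
  unfolding W_free_def FL_def W_idx_Idx by simp
lemma W_rel_RelL: "W_rel m n d k = RelL m n (d+k) d"
  unfolding W_rel_def RelL_def W_idx_Idx by simp

lemma finite_Pm: "finite (Pm N)"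
  unfolding Pm_def by (rule finite_permutations) simp

lemma finite_Idx: "finite (Idx m n N L)"
proof -
  have "Idx m n N L = {xs. set xs \<subseteq> {1..m+n} \<and> length xs = L} \<times> {\<sigma>. \<sigma> permutes {1..N}}"
    unfolding Idx_def by auto
  moreover have "finite {xs. set xs \<subseteq> {1..m+n} \<and> length xs = L}"
    by (rule finite_lists_length_eq) simp
  moreover have "finite {\<sigma>. \<sigma> permutes {1..N}}" by (rule finite_permutations) simp
  ultimately show ?thesis by simp
qed

lemma FL_fsupp: "f \<in> FL m n N L \<Longrightarrow> fsupp f"
  unfolding FL_def by (rule fsupp_subset[OF finite_Idx]) auto

lemma FL_delta: "x \<in> Idx m n N L \<Longrightarrow> delta x \<in> FL m n N L"
  unfolding FL_def delta_def by auto

lemma FL_zero[simp]: "(\<lambda>y. 0) \<in> FL m n N L" unfolding FL_def by simp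
lemma FL_add: "f \<in> FL m n N L \<Longrightarrow> g \<in> FL m n N L \<Longrightarrow> (\<lambda>y. f y + g y) \<in> FL m n N L"
  unfolding FL_def by simp
lemma FL_diff: "f \<in> FL m n N L \<Longrightarrow> g \<in> FL m n N L \<Longrightarrow> (\<lambda>y. f y - g y) \<in> FL m n N L"
  unfolding FL_def by simp
lemma FL_scale: "f \<in> FL m n N L \<Longrightarrow> (\<lambda>y. c * f y) \<in> FL m n N L"
  unfolding FL_def by simp
lemma FL_sum: "finite S \<Longrightarrow> (\<And>i. i \<in> S \<Longrightarrow> h i \<in> FL m n N L) \<Longrightarrow> (\<lambda>y. \<Sum>i\<in>S. h i y) \<in> FL m n N L"
  unfolding FL_def by simp

lemma FL_decomp: "f \<in> FL m n N L \<Longrightarrow> f = (\<lambda>y. \<Sum>x\<in>Idx m n N L. f x * delta x y)"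
  by (rule fsupp_decomp[OF finite_Idx]) (auto simp: FL_def)

lemma delta_apply: "delta x y = (if y = x then 1 else 0)" unfolding delta_def by simp

lemma rel_fsupp: "fsupp (rel m i x)"
proof -
  obtain xs \<sigma> where x: "x = (xs, \<sigma>)" by (cases x)
  show ?thesis unfolding x rel_def Let_def prod.case
    by (intro fsupp_diff fsupp_scale) simp_all
qed

lemma rel_eq: "rel m i (xs, \<sigma>) = (\<lambda>y. (if is_odd m (xs ! (length xs - i - 1)) \<and> is_odd m (xs ! Suc (length xs - i - 1)) then -1 else 1)
         * delta (xs[length xs - i - 1 := xs ! Suc (length xs - i - 1), Suc (length xs - i - 1) := xs ! (length xs - i - 1)], \<sigma>) y
       - delta (xs, s i \<circ> \<sigma>) y)"
  unfolding rel_def Let_def by simp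

lemma RelL_fsupp: "f \<in> RelL m n N L \<Longrightarrow> fsupp f"
  unfolding RelL_def by (rule cspan_fsupp) (auto simp: rel_fsupp)

section \<open>right translation\<close>

definition Ur :: "(nat \<Rightarrow> nat) \<Rightarrow> vec \<Rightarrow> vec" where
  "Ur \<rho> f = (\<lambda>(xs, \<sigma>). f (xs, \<sigma> \<circ> inv \<rho>))"

lemma Ur_apply: "Ur \<rho> f (xs, \<sigma>) = f (xs, \<sigma> \<circ> inv \<rho>)" unfolding Ur_def by simp

lemma bij_comp_inv_eq: "bij \<rho> \<Longrightarrow> (\<sigma> \<circ> inv \<rho> = \<alpha>) \<longleftrightarrow> (\<sigma> = \<alpha> \<circ> \<rho>)"
  by (metis bij_is_surj comp_assoc comp_id surj_iff bij_is_inj inv_o_cancel)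

lemma Ur_delta: assumes "bij \<rho>" shows "Ur \<rho> (delta (xs, \<alpha>)) = delta (xs, \<alpha> \<circ> \<rho>)"
proof
  fix y :: idx obtain ys \<sigma> where y: "y = (ys, \<sigma>)" by (cases y)
  show "Ur \<rho> (delta (xs, \<alpha>)) y = delta (xs, \<alpha> \<circ> \<rho>) y"
    unfolding y Ur_apply delta_def using bij_comp_inv_eq[OF assms, of \<sigma> \<alpha>] by auto
qed

lemma Ur_add: "Ur \<rho> (\<lambda>y. f y + g y) = (\<lambda>y. Ur \<rho> f y + Ur \<rho> g y)"
  unfolding Ur_def by auto
lemma Ur_scale: "Ur \<rho> (\<lambda>y. c * f y) = (\<lambda>y. c * Ur \<rho> f y)"
  unfolding Ur_def by auto
lemma Ur_diff: "Ur \<rho> (\<lambda>y. f y - g y) = (\<lambda>y. Ur \<rho> f y - Ur \<rho> g y)"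
  unfolding Ur_def by auto
lemma Ur_sum: "Ur \<rho> (\<lambda>y. \<Sum>i\<in>S. h i y) = (\<lambda>y. \<Sum>i\<in>S. Ur \<rho> (h i) y)"
  unfolding Ur_def by auto
lemma Ur_zero[simp]: "Ur \<rho> (\<lambda>y. 0) = (\<lambda>y. 0)"
  unfolding Ur_def by auto

lemma Ur_id[simp]: "Ur id f = f"
  unfolding Ur_def by (auto simp: fun_eq_iff)

lemma Ur_Ur: "bij \<rho> \<Longrightarrow> bij \<tau> \<Longrightarrow> Ur \<rho> (Ur \<tau> f) = Ur (\<tau> \<circ> \<rho>) f"
  unfolding Ur_def by (auto simp: fun_eq_iff o_inv_distrib comp_assoc)

lemma fsupp_Ur: assumes "bij \<rho>" "fsupp f" shows "fsupp (Ur \<rho> f)"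
proof -
  have "{y. Ur \<rho> f y \<noteq> 0} \<subseteq> (\<lambda>(xs, \<sigma>). (xs, \<sigma> \<circ> \<rho>)) ` {y. f y \<noteq> 0}"
  proof
    fix y assume "y \<in> {y. Ur \<rho> f y \<noteq> 0}"
    then obtain xs \<sigma> where y: "y = (xs, \<sigma>)" "f (xs, \<sigma> \<circ> inv \<rho>) \<noteq> 0"
      by (cases y) (auto simp: Ur_def)
    have "\<sigma> = (\<sigma> \<circ> inv \<rho>) \<circ> \<rho>" using bij_comp_inv_eq[OF assms(1)] by blast
    then show "y \<in> (\<lambda>(xs, \<sigma>). (xs, \<sigma> \<circ> \<rho>)) ` {y. f y \<noteq> 0}"
      using y by (intro image_eqI[of _ _ "(xs, \<sigma> \<circ> inv \<rho>)"]) auto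
  qed
  moreover have "finite ((\<lambda>(xs, \<sigma>). (xs, \<sigma> \<circ> \<rho>)) ` {y. f y \<noteq> 0})"
    using assms(2) unfolding fsupp_def by simp
  ultimately show ?thesis unfolding fsupp_def by (rule finite_subset)
qed

lemma linop_Ur: "bij \<rho> \<Longrightarrow> linop (Ur \<rho>)"
  unfolding linop_def by (auto simp: fsupp_Ur Ur_add Ur_scale)

lemma Pm_bij: "\<rho> \<in> Pm N \<Longrightarrow> bij \<rho>"
  unfolding Pm_def by (auto simp: permutes_bij)

lemma FL_Ur: assumes "\<rho> \<in> Pm N" "f \<in> FL m n N L" shows "Ur \<rho> f \<in> FL m n N L"
  unfolding FL_def
proof (intro CollectI allI impI)
  fix y assume y: "y \<notin> Idx m n N L"
  obtain xs \<sigma> where yy: "y = (xs, \<sigma>)" by (cases y)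
  have "(xs, \<sigma> \<circ> inv \<rho>) \<notin> Idx m n N L"
  proof
    assume "(xs, \<sigma> \<circ> inv \<rho>) \<in> Idx m n N L"
    then have "\<sigma> \<circ> inv \<rho> \<circ> \<rho> permutes {1..N}" using assms(1)
      unfolding Idx_def Pm_def by (auto intro: permutes_compose)
    moreover have "\<sigma> \<circ> inv \<rho> \<circ> \<rho> = \<sigma>" using assms(1) unfolding Pm_def
      by (simp add: comp_assoc permutes_inv_o(2))
    ultimately show False using y yy \<open>(xs, \<sigma> \<circ> inv \<rho>) \<in> Idx m n N L\<close> unfolding Idx_def by auto
  qed
  then show "Ur \<rho> f y = 0" using assms(2) yy unfolding FL_def Ur_def by auto
qed

lemma R_mult_Ur:
  assumes "fsupp f"
  shows "R_mult d k c f = (\<lambda>y. \<Sum>\<rho>\<in>Pm (d+k). c \<rho> * Ur \<rho> f y)"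
proof
  fix y :: idx
  obtain ys \<pi> where yy: "y = (ys, \<pi>)" by (cases y)
  let ?S = "{x. f x \<noteq> 0}"
  have fin: "finite ?S" using assms unfolding fsupp_def .
  have "R_mult d k c f y = (\<Sum>x\<in>?S. f x * (\<Sum>\<rho>\<in>Pm (d+k). c \<rho> * delta (fst x, snd x \<circ> \<rho>) y))"
    unfolding R_mult_def lin_ext_def Pm_def by (intro sum.cong) (auto split: prod.splits)
  also have "\<dots> = (\<Sum>\<rho>\<in>Pm (d+k). c \<rho> * (\<Sum>x\<in>?S. f x * delta (fst x, snd x \<circ> \<rho>) y))"
    by (simp add: sum_distrib_left sum_distrib_right mult_ac sum.swap[of _ ?S])
  also have "\<dots> = (\<Sum>\<rho>\<in>Pm (d+k). c \<rho> * Ur \<rho> f y)"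
  proof (rule sum.cong[OF refl])
    fix \<rho> assume \<rho>: "\<rho> \<in> Pm (d+k)"
    have b: "bij \<rho>" using Pm_bij[OF \<rho>] .
    have "(\<Sum>x\<in>?S. f x * delta (fst x, snd x \<circ> \<rho>) y) = (\<Sum>x\<in>?S. if x = (ys, \<pi> \<circ> inv \<rho>) then f x else 0)"
      by (rule sum.cong) (auto simp: delta_def yy bij_comp_inv_eq[OF b, symmetric])
    also have "\<dots> = f (ys, \<pi> \<circ> inv \<rho>)" using fin by (auto simp: sum.delta')
    finally show "c \<rho> * (\<Sum>x\<in>?S. f x * delta (fst x, snd x \<circ> \<rho>) y) = c \<rho> * Ur \<rho> f y"
      by (simp add: yy Ur_def)
  qed
  finally show "R_mult d k c f y = (\<Sum>\<rho>\<in>Pm (d+k). c \<rho> * Ur \<rho> f y)" .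
qed

lemma R_mult_ind:
  assumes "fsupp f" "\<rho> \<in> Pm (d+k)"
  shows "R_mult d k (\<lambda>\<rho>'. if \<rho>' = \<rho> then 1 else 0) f = Ur \<rho> f"
proof -
  have "R_mult d k (\<lambda>\<rho>'. if \<rho>' = \<rho> then 1 else 0) f = (\<lambda>y. \<Sum>\<rho>'\<in>Pm (d+k). if \<rho>' = \<rho> then Ur \<rho>' f y else 0)"
    unfolding R_mult_Ur[OF assms(1)] by (intro ext sum.cong) auto
  also have "\<dots> = Ur \<rho> f" using assms(2) finite_Pm by (simp add: sum.delta')
  finally show ?thesis .
qed

lemma linop_R_mult: "linop (R_mult d k c)"
  unfolding R_mult_def
proof (rule linop_lin_ext)
  have "finite {\<rho>. \<rho> permutes {1..d+k}}" by (rule finite_permutations) simp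
  then show "fsupp (case x of (xs, \<sigma>) \<Rightarrow> \<lambda>y. \<Sum>\<rho>\<in>{\<rho>. \<rho> permutes {1..d + k}}. c \<rho> * delta (xs, \<sigma> \<circ> \<rho>) y)" for x
    by (cases x) (auto intro!: fsupp_sum fsupp_scale)
qed


lemma s_apply: "s i j = (if j = i then Suc i else if j = Suc i then i else j)"
  unfolding s_def by simp

lemma s_s[simp]: "s i \<circ> s i = id"
  by (auto simp: fun_eq_iff s_def)

lemma s_permutes: "1 \<le> i \<Longrightarrow> Suc i \<le> N \<Longrightarrow> s i permutes {1..N}"
proof -
  assume a: "1 \<le> i" "Suc i \<le> N"
  have "s i = Transposition.transpose i (Suc i)"
    by (auto simp: fun_eq_iff s_def Transposition.transpose_def)
  then show ?thesis using a by (simp add: permutes_swap_id)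
qed

lemma cyc_formula:
  "k \<le> L \<Longrightarrow> cyc k L j = (if j = k then L else if k < j \<and> j \<le> L then j - 1 else j)"
proof (induction L arbitrary: j)
  case 0 then show ?case by simp
next
  case (Suc L)
  show ?case
  proof (cases "k \<le> L")
    case True
    then show ?thesis using Suc.IH[OF True] by (auto simp: s_def)
  next
    case False
    then have "k = Suc L" using Suc.prems by simp
    then show ?thesis by simp
  qed
qed

lemma cyc_triv: "L \<le> k \<Longrightarrow> cyc k L = id"
  by (induction L) auto

lemma fsupp_if[simp]: "fsupp g \<Longrightarrow> fsupp (\<lambda>y. if P then g y else 0)"
  by (cases P) auto

lemma sum_ind: "finite A \<Longrightarrow> a \<in> A \<Longrightarrow> (\<lambda>y. \<Sum>b\<in>A. (if b = a then 1 else 0) * (g :: _ \<Rightarrow> _ \<Rightarrow> complex) b y) = g a"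
proof
  fix y
  assume a: "finite A" "a \<in> A"
  have "(\<Sum>b\<in>A. (if b = a then 1 else 0) * g b y) = (\<Sum>b\<in>A. if b = a then g b y else 0)"
    by (rule sum.cong) auto
  then show "(\<Sum>b\<in>A. (if b = a then 1 else 0) * g b y) = g a y" using a by (simp add: sum.delta)
qed

lemma cyc_permutes: "1 \<le> k \<Longrightarrow> L \<le> N \<Longrightarrow> cyc k L permutes {1..N}"
proof (induction L)
  case 0 then show ?case by (simp add: permutes_id[unfolded id_def])
next
  case (Suc L)
  show ?case
  proof (cases "k \<le> L")
    case True
    then have "s L \<circ> cyc k L permutes {1..N}" using Suc by (intro permutes_compose s_permutes) auto
    then show ?thesis using True by (simp add: comp_def)
  next
    case False then show ?thesis by (simp add: permutes_id[unfolded id_def])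
  qed
qed

lemma cyc_step: "k < L \<Longrightarrow> cyc k L = cyc (Suc k) L \<circ> s k"
  by (auto simp: fun_eq_iff cyc_formula s_def)

lemma cyc_s_low: "k < i \<Longrightarrow> i < L \<Longrightarrow> cyc k L \<circ> s i = s (i - 1) \<circ> cyc k L"
  by (auto simp: fun_eq_iff cyc_formula s_def)

lemma cyc_s_high: "Suc i < k \<Longrightarrow> k \<le> L \<Longrightarrow> cyc k L \<circ> s i = s i \<circ> cyc k L"
  by (auto simp: fun_eq_iff cyc_formula s_def)

definition ind :: "nat \<Rightarrow> nat \<Rightarrow> complex" where "ind a = (\<lambda>b. if b = a then 1 else 0)"

lemma linop_L_vec: "linop (L_vec m n c)"
  unfolding L_vec_def by (rule linop_lin_ext) (auto intro!: fsupp_sum fsupp_scale)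

lemma L_vec_delta: "L_vec m n c (delta (xs, \<sigma>)) = (\<lambda>y. \<Sum>a\<in>{1..m+n}. c a * delta (a # xs, \<sigma>) y)"
  unfolding L_vec_def by simp

lemma L_vec_ind_delta: "a \<in> {1..m+n} \<Longrightarrow> L_vec m n (ind a) (delta (xs, \<sigma>)) = delta (a # xs, \<sigma>)"
  unfolding L_vec_delta ind_def by (rule sum_ind) auto

lemma linop_L_perm: "linop (L_perm \<rho>)"
  unfolding L_perm_def by (rule linop_lin_ext) auto

lemma L_perm_delta: "L_perm \<rho> (delta (xs, \<sigma>)) = delta (xs, shift (length xs) \<rho> \<circ> \<sigma>)"
  unfolding L_perm_def by simp

lemma shift0: "\<rho> permutes {1..N} \<Longrightarrow> shift 0 \<rho> = \<rho>"
  unfolding shift_def by (auto simp: fun_eq_iff permutes_def)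

lemma L_perm_delta0: "\<rho> permutes {1..N} \<Longrightarrow> L_perm \<rho> (delta ([], \<sigma>)) = delta ([], \<rho> \<circ> \<sigma>)"
  by (simp add: L_perm_delta shift0)

definition sg :: "nat \<Rightarrow> nat \<Rightarrow> nat list \<Rightarrow> complex" where
  "sg m a u = (-1) ^ (if is_odd m a then length (filter (is_odd m) u) else 0)"

definition del :: "nat \<Rightarrow> nat list \<Rightarrow> nat list" where
  "del p xs = take p xs @ drop (Suc p) xs"

lemma LDB_eq:
  "L_dual_basis m a (xs, \<sigma>) = (\<lambda>y. \<Sum>p\<in>{0..<length xs}. (if xs ! p = a then
      sg m a (take p xs) * delta (del p xs, cyc (length xs - p) (length xs) \<circ> \<sigma>) y else 0))"
proof
  fix y
  let ?L = "length xs"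
  show "L_dual_basis m a (xs, \<sigma>) y = (\<Sum>p\<in>{0..<?L}. (if xs ! p = a then
      sg m a (take p xs) * delta (del p xs, cyc (?L - p) ?L \<circ> \<sigma>) y else 0))"
    unfolding L_dual_basis_def prod.case
    by (rule sum.reindex_bij_witness[of _ "\<lambda>p. ?L - p" "\<lambda>k. ?L - k"])
       (auto simp: sg_def del_def Suc_diff_le)
qed

lemma fsupp_LDB: "fsupp (L_dual_basis m a x)"
  by (cases x) (auto simp: LDB_eq intro!: fsupp_sum)

lemma linop_L_dual: "linop (L_dual m n c)"
  unfolding L_dual_def by (rule linop_lin_ext) (auto intro!: fsupp_sum fsupp_scale fsupp_LDB)

lemma L_dual_delta: "L_dual m n c (delta x) = (\<lambda>y. \<Sum>a\<in>{1..m+n}. c a * L_dual_basis m a x y)"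
  unfolding L_dual_def by simp

lemma L_dual_ind_delta: "a \<in> {1..m+n} \<Longrightarrow> L_dual m n (ind a) (delta x) = L_dual_basis m a x"
  unfolding L_dual_delta ind_def by (rule sum_ind) auto

section \<open>commutation with right translations\<close>

lemma L_vec_Ur: assumes "bij \<rho>" "fsupp f" shows "L_vec m n c (Ur \<rho> f) = Ur \<rho> (L_vec m n c f)"
proof -
  have "(L_vec m n c \<circ> Ur \<rho>) f = (Ur \<rho> \<circ> L_vec m n c) f"
  proof (rule linop_ext'[OF _ _ assms(2)])
    show "linop (L_vec m n c \<circ> Ur \<rho>)" "linop (Ur \<rho> \<circ> L_vec m n c)"
      using assms linop_Ur linop_L_vec by auto
    fix x :: idx obtain xs \<sigma> where x: "x = (xs, \<sigma>)" by (cases x)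
    show "(L_vec m n c \<circ> Ur \<rho>) (delta x) = (Ur \<rho> \<circ> L_vec m n c) (delta x)"
      unfolding x by (simp add: Ur_delta[OF assms(1)] L_vec_delta Ur_sum Ur_scale)
  qed
  then show ?thesis by simp
qed

lemma L_perm_Ur: assumes "bij \<rho>" "fsupp f" shows "L_perm \<tau> (Ur \<rho> f) = Ur \<rho> (L_perm \<tau> f)"
proof -
  have "(L_perm \<tau> \<circ> Ur \<rho>) f = (Ur \<rho> \<circ> L_perm \<tau>) f"
  proof (rule linop_ext'[OF _ _ assms(2)])
    show "linop (L_perm \<tau> \<circ> Ur \<rho>)" "linop (Ur \<rho> \<circ> L_perm \<tau>)"
      using assms linop_Ur linop_L_perm by auto
    fix x :: idx obtain xs \<sigma> where x: "x = (xs, \<sigma>)" by (cases x)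
    show "(L_perm \<tau> \<circ> Ur \<rho>) (delta x) = (Ur \<rho> \<circ> L_perm \<tau>) (delta x)"
      unfolding x by (simp add: Ur_delta[OF assms(1)] L_perm_delta comp_assoc)
  qed
  then show ?thesis by simp
qed

lemma LDB_Ur: assumes "bij \<rho>" shows "Ur \<rho> (L_dual_basis m a (xs, \<sigma>)) = L_dual_basis m a (xs, \<sigma> \<circ> \<rho>)"
  unfolding LDB_eq Ur_sum by (intro ext sum.cong) (auto simp: Ur_scale Ur_delta[OF assms] comp_assoc)

lemma L_dual_Ur: assumes "bij \<rho>" "fsupp f" shows "L_dual m n c (Ur \<rho> f) = Ur \<rho> (L_dual m n c f)"
proof -
  have "(L_dual m n c \<circ> Ur \<rho>) f = (Ur \<rho> \<circ> L_dual m n c) f"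
  proof (rule linop_ext'[OF _ _ assms(2)])
    show "linop (L_dual m n c \<circ> Ur \<rho>)" "linop (Ur \<rho> \<circ> L_dual m n c)"
      using assms linop_Ur linop_L_dual by auto
    fix x :: idx obtain xs \<sigma> where x: "x = (xs, \<sigma>)" by (cases x)
    show "(L_dual m n c \<circ> Ur \<rho>) (delta x) = (Ur \<rho> \<circ> L_dual m n c) (delta x)"
      unfolding x by (simp add: Ur_delta[OF assms(1)] L_dual_delta Ur_sum Ur_scale LDB_Ur[OF assms(1)])
  qed
  then show ?thesis by simp
qed


definition csub :: "vec set \<Rightarrow> bool" where
  "csub C \<longleftrightarrow> (\<lambda>y. 0) \<in> C \<and> (\<forall>f g. f \<in> C \<longrightarrow> g \<in> C \<longrightarrow> (\<lambda>y. f y + g y) \<in> C)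
     \<and> (\<forall>f c. f \<in> C \<longrightarrow> (\<lambda>y. c * f y) \<in> C)"

lemma csub_cspan: "csub (cspan B)"
  unfolding csub_def by (auto intro: cspan_add cspan_scale)

lemma csub_FL: "csub (FL m n N L)"
  unfolding csub_def by (auto intro: FL_add FL_scale)

lemma csub_RelL: "csub (RelL m n N L)"
  unfolding RelL_def by (rule csub_cspan)

lemma csub_sum:
  assumes "csub C" "finite S" "\<And>i. i \<in> S \<Longrightarrow> h i \<in> C"
  shows "(\<lambda>y. \<Sum>i\<in>S. c i * h i y) \<in> C"
  using assms(2,3)
proof (induction S rule: finite_induct)
  case empty then show ?case using assms(1) unfolding csub_def by simp
next
  case (insert x F)
  have "(\<lambda>y. c x * h x y + (\<Sum>i\<in>F. c i * h i y)) \<in> C"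
    using insert assms(1) unfolding csub_def by auto
  then show ?case using insert by simp
qed

lemma csub_sum':
  assumes "csub C" "finite S" "\<And>i. i \<in> S \<Longrightarrow> h i \<in> C"
  shows "(\<lambda>y. \<Sum>i\<in>S. h i y) \<in> C"
  using csub_sum[OF assms, where c="\<lambda>_. 1"] by simp

lemma csub_add: "csub C \<Longrightarrow> f \<in> C \<Longrightarrow> g \<in> C \<Longrightarrow> (\<lambda>y. f y + g y) \<in> C"
  unfolding csub_def by blast
lemma csub_scale: "csub C \<Longrightarrow> f \<in> C \<Longrightarrow> (\<lambda>y. c * f y) \<in> C"
  unfolding csub_def by blast
lemma csub_zero: "csub C \<Longrightarrow> (\<lambda>y. 0) \<in> C"
  unfolding csub_def by blast
lemma csub_diff: "csub C \<Longrightarrow> f \<in> C \<Longrightarrow> g \<in> C \<Longrightarrow> (\<lambda>y. f y - g y) \<in> C"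
  using csub_add[of C f "\<lambda>y. (-1) * g y"] csub_scale[of C g "-1"] by simp

lemma linop_into:
  assumes "linop T" "csub C" "f \<in> FL m n N L" "\<And>x. x \<in> Idx m n N L \<Longrightarrow> T (delta x) \<in> C"
  shows "T f \<in> C"
proof -
  have "T f = T (\<lambda>y. \<Sum>x\<in>Idx m n N L. f x * delta x y)"
    by (rule arg_cong[OF FL_decomp[OF assms(3)]])
  also have "\<dots> = (\<lambda>y. \<Sum>x\<in>Idx m n N L. f x * T (delta x) y)"
    by (rule linop_sum[OF assms(1) finite_Idx]) simp
  also have "\<dots> \<in> C" by (rule csub_sum[OF assms(2) finite_Idx assms(4)])
  finally show ?thesis .
qed

lemma linop_minus: "linop T \<Longrightarrow> linop U \<Longrightarrow> linop (\<lambda>f y. T f y - U f y)"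
  unfolding linop_def by (auto simp: algebra_simps)

lemma linop_smult: "linop (\<lambda>f y. c * f y)"
  unfolding linop_def by (auto simp: algebra_simps)

lemma L_vec_FL: assumes "f \<in> FL m n N L" shows "L_vec m n c f \<in> FL m n N (Suc L)"
proof (rule linop_into[OF linop_L_vec csub_FL assms])
  fix x assume x: "x \<in> Idx m n N L"
  obtain xs \<sigma> where xx: "x = (xs, \<sigma>)" by (cases x)
  show "L_vec m n c (delta x) \<in> FL m n N (Suc L)"
    unfolding xx L_vec_delta
    by (rule csub_sum[OF csub_FL]) (use x xx in \<open>auto intro!: FL_delta simp: Idx_def\<close>)
qed

lemma LDB_FL:
  assumes "(xs, \<sigma>) \<in> Idx m n N L" "L \<le> N"
  shows "L_dual_basis m a (xs, \<sigma>) \<in> FL m n N (L - 1)"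
  unfolding LDB_eq
proof (rule csub_sum'[OF csub_FL])
  show "finite {0..<length xs}" by simp
  fix p assume "p \<in> {0..<length xs}"
  then have p: "p < length xs" by simp
  have "cyc (length xs - p) (length xs) \<circ> \<sigma> permutes {1..N}"
    using assms p by (intro permutes_compose cyc_permutes) (auto simp: Idx_def)
  moreover have "set (del p xs) \<subseteq> {1..m+n}" using assms unfolding Idx_def del_def
    by (auto dest: in_set_takeD in_set_dropD)
  ultimately have "delta (del p xs, cyc (length xs - p) (length xs) \<circ> \<sigma>) \<in> FL m n N (L - 1)"
    using assms p by (intro FL_delta) (auto simp: Idx_def del_def)
  then show "(\<lambda>y. if xs ! p = a then sg m a (take p xs) * delta (del p xs, cyc (length xs - p) (length xs) \<circ> \<sigma>) y else 0)
      \<in> FL m n N (L - 1)"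
    by (cases "xs ! p = a") (auto intro: FL_scale)
qed

lemma L_dual_FL: assumes "f \<in> FL m n N L" "L \<le> N" shows "L_dual m n c f \<in> FL m n N (L - 1)"
proof (rule linop_into[OF linop_L_dual csub_FL assms(1)])
  fix x assume x: "x \<in> Idx m n N L"
  obtain xs \<sigma> where xx: "x = (xs, \<sigma>)" by (cases x)
  show "L_dual m n c (delta x) \<in> FL m n N (L - 1)"
    unfolding L_dual_delta
    by (rule csub_sum[OF csub_FL]) (use x xx assms(2) LDB_FL in auto)
qed

lemma L_perm_FL: assumes "f \<in> FL m n N 0" "\<rho> permutes {1..N}" shows "L_perm \<rho> f \<in> FL m n N 0"
proof (rule linop_into[OF linop_L_perm csub_FL assms(1)])
  fix x assume x: "x \<in> Idx m n N 0"
  obtain xs \<sigma> where xx: "x = (xs, \<sigma>)" by (cases x)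
  show "L_perm \<rho> (delta x) \<in> FL m n N 0"
    using x assms(2) unfolding xx by (auto simp: Idx_def L_perm_delta0 intro!: FL_delta permutes_compose)
qed

lemma rel_in_RelL: "x \<in> Idx m n N L \<Longrightarrow> 1 \<le> i \<Longrightarrow> i < L \<Longrightarrow> rel m i x \<in> RelL m n N L"
  unfolding RelL_def by (rule cspan_base) blast

lemma RelL_linop:
  assumes "linop T" "f \<in> RelL m n N L"
    "\<And>i x. x \<in> Idx m n N L \<Longrightarrow> 1 \<le> i \<Longrightarrow> i < L \<Longrightarrow> T (rel m i x) \<in> C" "csub C"
  shows "T f \<in> C"
proof -
  obtain S c where S: "finite S" "S \<subseteq> {rel m i x | i x. x \<in> Idx m n N L \<and> 1 \<le> i \<and> i < L}"
    "f = (\<lambda>y. \<Sum>b\<in>S. c b * b y)"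
    using assms(2) unfolding RelL_def cspan_def by blast
  have fs: "\<And>b. b \<in> S \<Longrightarrow> fsupp b" using S(2) rel_fsupp by blast
  have "T f = (\<lambda>y. \<Sum>b\<in>S. c b * T b y)" unfolding S(3) by (rule linop_sum[OF assms(1) S(1) fs])
  also have "\<dots> \<in> C"
  proof (rule csub_sum[OF assms(4) S(1)])
    fix b assume "b \<in> S"
    then obtain i x where "b = rel m i x" "x \<in> Idx m n N L" "1 \<le> i" "i < L" using S(2) by blast
    then show "T b \<in> C" using assms(3) by simp
  qed
  finally show ?thesis .
qed

lemma L_vec_rel:
  assumes "x \<in> Idx m n N L" "1 \<le> i" "i < L"
  shows "L_vec m n c (rel m i x) \<in> RelL m n N (Suc L)"
proof -
  obtain xs \<sigma> where xx: "x = (xs, \<sigma>)" by (cases x)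
  have len: "length xs = L" using assms xx by (auto simp: Idx_def)
  define p where "p = length xs - i - 1"
  have p: "Suc p < L" using assms len p_def by auto
  define \<epsilon> where "\<epsilon> = (if is_odd m (xs ! p) \<and> is_odd m (xs ! Suc p) then -1 else 1 :: complex)"
  have r: "rel m i (xs, \<sigma>) = (\<lambda>y. \<epsilon> * delta (xs[p := xs ! Suc p, Suc p := xs ! p], \<sigma>) y - delta (xs, s i \<circ> \<sigma>) y)"
    unfolding rel_eq p_def \<epsilon>_def by simp
  have ra: "rel m i (a # xs, \<sigma>) = (\<lambda>y. \<epsilon> * delta (a # xs[p := xs ! Suc p, Suc p := xs ! p], \<sigma>) y - delta (a # xs, s i \<circ> \<sigma>) y)" for a
  proof -
    have e: "length (a # xs) - i - 1 = Suc p" using p len p_def assms(3) by auto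
    show ?thesis unfolding rel_eq e \<epsilon>_def by simp
  qed
  have "L_vec m n c (rel m i x) = (\<lambda>y. \<epsilon> * L_vec m n c (delta (xs[p := xs ! Suc p, Suc p := xs ! p], \<sigma>)) y
        - L_vec m n c (delta (xs, s i \<circ> \<sigma>)) y)"
    unfolding xx r by (simp add: linop_diff[OF linop_L_vec] linopD3[OF linop_L_vec])
  also have "\<dots> = (\<lambda>y. \<Sum>a\<in>{1..m+n}. c a * rel m i (a # xs, \<sigma>) y)"
    unfolding L_vec_delta ra by (simp add: sum_distrib_left sum_subtractf algebra_simps)
  also have "\<dots> \<in> RelL m n N (Suc L)"
    by (rule csub_sum[OF csub_RelL], simp, rule rel_in_RelL) (use assms xx len in \<open>auto simp: Idx_def\<close>)
  finally show ?thesis .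
qed

lemma L_vec_RelL:
  assumes "f \<in> RelL m n N L" shows "L_vec m n c f \<in> RelL m n N (Suc L)"
  by (rule RelL_linop[OF linop_L_vec assms L_vec_rel csub_RelL])


lemma sg_snoc: "sg m a (u @ [b]) = sg m a u * (if is_odd m b \<and> is_odd m a then -1 else 1)"
  unfolding sg_def by auto

lemma sg_Nil[simp]: "sg m a [] = 1" unfolding sg_def by simp

lemma chain:
  assumes "(pre @ a # suf, \<tau>) \<in> Idx m n N L" "L \<le> N"
  shows "(\<lambda>y. sg m a pre * delta (a # pre @ suf, cyc (L - length pre) L \<circ> \<tau>) y
              - delta (pre @ a # suf, \<tau>) y) \<in> RelL m n N L"
  using assms
proof (induction pre arbitrary: \<tau> suf rule: rev_induct)
  case Nil
  have L: "L = length (a # suf)" using Nil by (auto simp: Idx_def)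
  have "cyc L L = id" by (rule cyc_triv) simp
  then show ?case using L csub_zero[OF csub_RelL] by simp
next
  case (snoc b pre')
  define z where "z = pre' @ b # a # suf"
  define z' where "z' = pre' @ a # b # suf"
  define q where "q = length pre'"
  define k where "k = L - q - 1"
  have L: "L = length z" using snoc.prems unfolding z_def by (auto simp: Idx_def)
  have qL: "q + 2 \<le> L" using L unfolding z_def q_def by simp
  have k1: "1 \<le> k" "k < L" using qL unfolding k_def by auto
  have \<tau>: "\<tau> permutes {1..N}" using snoc.prems by (auto simp: Idx_def)
  have sk: "s k permutes {1..N}" using k1 snoc.prems(2) by (intro s_permutes) auto
  have setz: "set z \<subseteq> {1..m+n}" using snoc.prems unfolding z_def by (auto simp: Idx_def)
  define \<epsilon> where "\<epsilon> = (if is_odd m b \<and> is_odd m a then -1 else 1 :: complex)"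
  have zIdx: "(z, s k \<circ> \<tau>) \<in> Idx m n N L" using setz L \<tau> sk by (auto simp: Idx_def intro: permutes_compose)
  have z'Idx: "(pre' @ a # b # suf, s k \<circ> \<tau>) \<in> Idx m n N L"
    using setz L \<tau> sk unfolding z_def by (auto simp: Idx_def intro: permutes_compose)
  have e1: "length z - k - 1 = q" using qL L unfolding k_def by simp
  have zq: "z ! q = b" "z ! Suc q = a" unfolding z_def q_def by (auto simp: nth_append)
  have zupd: "z[q := a, Suc q := b] = z'" unfolding z_def z'_def q_def by (simp add: list_update_append)
  have r: "rel m k (z, s k \<circ> \<tau>) = (\<lambda>y. \<epsilon> * delta (z', s k \<circ> \<tau>) y - delta (z, \<tau>) y)"
    unfolding rel_eq e1 zq zupd \<epsilon>_def by (simp add: comp_assoc[symmetric] conj_commute)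
  have relin: "rel m k (z, s k \<circ> \<tau>) \<in> RelL m n N L"
    by (rule rel_in_RelL[OF zIdx]) (use k1 in auto)
  have IH: "(\<lambda>y. sg m a pre' * delta (a # pre' @ b # suf, cyc (L - q) L \<circ> (s k \<circ> \<tau>)) y
              - delta (pre' @ a # b # suf, s k \<circ> \<tau>) y) \<in> RelL m n N L"
    unfolding q_def by (rule snoc.IH[OF z'Idx snoc.prems(2)])
  have cy: "cyc (L - q) L \<circ> (s k \<circ> \<tau>) = cyc k L \<circ> \<tau>"
  proof -
    have "cyc k L = cyc (Suc k) L \<circ> s k" by (rule cyc_step) (use k1 in auto)
    moreover have "Suc k = L - q" using qL unfolding k_def by simp
    ultimately show ?thesis by (simp add: comp_assoc)
  qed
  have sum: "(\<lambda>y. \<epsilon> * (sg m a pre' * delta (a # pre' @ b # suf, cyc k L \<circ> \<tau>) y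
              - delta (pre' @ a # b # suf, s k \<circ> \<tau>) y) + (\<epsilon> * delta (z', s k \<circ> \<tau>) y - delta (z, \<tau>) y))
        \<in> RelL m n N L"
    by (rule csub_add[OF csub_RelL csub_scale[OF csub_RelL IH[unfolded cy]] relin[unfolded r]])
  have "L - length (pre' @ [b]) = k" unfolding k_def q_def by simp
  moreover have "sg m a (pre' @ [b]) = sg m a pre' * \<epsilon>" unfolding sg_snoc \<epsilon>_def by simp
  ultimately show ?case using sum unfolding z_def z'_def by (simp add: algebra_simps comp_def)
qed

lemma LDB_eq':
  "L_dual_basis m a (xs, \<sigma>) = (\<lambda>y. \<Sum>p\<in>{0..<length xs}. (if xs ! p = a then
      sg m a (take p xs) else 0) * delta (del p xs, cyc (length xs - p) (length xs) \<circ> \<sigma>) y)"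
  unfolding LDB_eq by (intro ext sum.cong) auto

lemma one_step_delta:
  assumes "(z, \<tau>) \<in> Idx m n N L" "L \<le> N"
  shows "(\<lambda>y. (\<Sum>a\<in>{1..m+n}. L_vec m n (ind a) (L_dual m n (ind a) (delta (z, \<tau>))) y) - of_nat L * delta (z, \<tau>) y)
     \<in> RelL m n N L"
proof -
  have len: "length z = L" using assms by (auto simp: Idx_def)
  have setz: "set z \<subseteq> {1..m+n}" using assms by (auto simp: Idx_def)
  let ?t = "\<lambda>p. delta (z ! p # del p z, cyc (L - p) L \<circ> \<tau>)"
  have A: "L_vec m n (ind a) (L_dual m n (ind a) (delta (z, \<tau>))) =
     (\<lambda>y. \<Sum>p\<in>{0..<L}. (if z ! p = a then sg m a (take p z) else 0) * delta (a # del p z, cyc (L - p) L \<circ> \<tau>) y)"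
    if a: "a \<in> {1..m+n}" for a
    unfolding L_dual_ind_delta[OF a] LDB_eq' len
    by (simp add: linop_sum[OF linop_L_vec] L_vec_ind_delta[OF a])
  have "(\<lambda>y. \<Sum>a\<in>{1..m+n}. L_vec m n (ind a) (L_dual m n (ind a) (delta (z, \<tau>))) y)
      = (\<lambda>y. \<Sum>a\<in>{1..m+n}. \<Sum>p\<in>{0..<L}. (if z ! p = a then sg m a (take p z) else 0) * delta (a # del p z, cyc (L - p) L \<circ> \<tau>) y)"
    by (intro ext sum.cong refl) (simp add: A)
  also have "\<dots> = (\<lambda>y. \<Sum>p\<in>{0..<L}. \<Sum>a\<in>{1..m+n}. (if z ! p = a then sg m a (take p z) * delta (a # del p z, cyc (L - p) L \<circ> \<tau>) y else 0))"
    by (subst sum.swap) (auto intro!: sum.cong)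
  also have "\<dots> = (\<lambda>y. \<Sum>p\<in>{0..<L}. sg m (z ! p) (take p z) * ?t p y)"
  proof (intro ext sum.cong refl)
    fix y p assume p: "p \<in> {0..<L}"
    then have "z ! p \<in> {1..m+n}" using setz len by (auto dest: nth_mem)
    then show "(\<Sum>a\<in>{1..m+n}. (if z ! p = a then sg m a (take p z) * delta (a # del p z, cyc (L - p) L \<circ> \<tau>) y else 0))
       = sg m (z ! p) (take p z) * ?t p y"
      by (simp add: sum.delta)
  qed
  finally have B: "(\<lambda>y. \<Sum>a\<in>{1..m+n}. L_vec m n (ind a) (L_dual m n (ind a) (delta (z, \<tau>))) y)
      = (\<lambda>y. \<Sum>p\<in>{0..<L}. sg m (z ! p) (take p z) * ?t p y)" .
  have C: "(\<lambda>y. (\<Sum>p\<in>{0..<L}. sg m (z ! p) (take p z) * ?t p y) - of_nat L * delta (z, \<tau>) y)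
      = (\<lambda>y. \<Sum>p\<in>{0..<L}. (sg m (z ! p) (take p z) * ?t p y - delta (z, \<tau>) y))"
    by (simp add: sum_subtractf)
  have D: "(\<lambda>y. \<Sum>p\<in>{0..<L}. (sg m (z ! p) (take p z) * ?t p y - delta (z, \<tau>) y)) \<in> RelL m n N L"
  proof (rule csub_sum'[OF csub_RelL], simp)
    fix p assume "p \<in> {0..<L}"
    then have p: "p < L" by simp
    have zz: "z = take p z @ z ! p # drop (Suc p) z" using p len by (simp add: id_take_nth_drop)
    have lt: "length (take p z) = p" using p len by simp
    have "(\<lambda>y. sg m (z ! p) (take p z) * delta (z ! p # take p z @ drop (Suc p) z, cyc (L - length (take p z)) L \<circ> \<tau>) y
              - delta (take p z @ z ! p # drop (Suc p) z, \<tau>) y) \<in> RelL m n N L"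
      by (rule chain) (use assms zz in auto)
    then show "(\<lambda>y. sg m (z ! p) (take p z) * ?t p y - delta (z, \<tau>) y) \<in> RelL m n N L"
      unfolding lt del_def using zz[symmetric] by simp
  qed
  have B': "(\<Sum>a\<in>{1..m+n}. L_vec m n (ind a) (L_dual m n (ind a) (delta (z, \<tau>))) y)
      = (\<Sum>p\<in>{0..<L}. sg m (z ! p) (take p z) * ?t p y)" for y
    using fun_cong[OF B, of y] by simp
  show ?thesis using D unfolding B' C .
qed

definition Ostep :: "nat \<Rightarrow> nat \<Rightarrow> nat \<Rightarrow> vec \<Rightarrow> vec" where
  "Ostep m n L f = (\<lambda>y. (\<Sum>a\<in>{1..m+n}. L_vec m n (ind a) (L_dual m n (ind a) f) y) - of_nat L * f y)"

lemma linop_Ostep: "linop (Ostep m n L)"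
proof -
  have "linop (\<lambda>f y. (\<Sum>a\<in>{1..m+n}. 1 * (L_vec m n (ind a) \<circ> L_dual m n (ind a)) f y) - of_nat L * f y)"
    by (intro linop_minus linop_comb linop_smult linop_comp linop_L_vec linop_L_dual) auto
  then show ?thesis unfolding Ostep_def[abs_def] by simp
qed

lemma one_step:
  assumes "f \<in> FL m n N L" "L \<le> N"
  shows "Ostep m n L f \<in> RelL m n N L"
  by (rule linop_into[OF linop_Ostep csub_RelL assms(1)])
     (use one_step_delta assms(2) in \<open>auto simp: Ostep_def\<close>)


fun Nop :: "nat \<Rightarrow> nat \<Rightarrow> nat list \<Rightarrow> vec \<Rightarrow> vec" where
  "Nop m n [] = id"
| "Nop m n (a # x) = L_vec m n (ind a) \<circ> Nop m n x \<circ> L_dual m n (ind a)"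

definition Xs :: "nat \<Rightarrow> nat \<Rightarrow> nat \<Rightarrow> nat list set" where
  "Xs m n j = {x. set x \<subseteq> {1..m+n} \<and> length x = j}"

fun cc :: "nat \<Rightarrow> nat \<Rightarrow> nat" where
  "cc 0 L = 1"
| "cc (Suc j) L = L * cc j (L - 1)"

lemma cc_fact: "cc j j = fact j"
  by (induction j) auto

lemma linop_Nop: "linop (Nop m n x)"
proof (induction x)
  case (Cons a x)
  then show ?case by (simp only: Nop.simps) (intro linop_comp linop_L_vec linop_L_dual)
qed simp

lemma finite_Xs: "finite (Xs m n j)"
  unfolding Xs_def by (rule finite_lists_length_eq) simp

lemma Xs_Suc: "Xs m n (Suc j) = (\<lambda>(a, x). a # x) ` ({1..m+n} \<times> Xs m n j)"
  unfolding Xs_def by (auto simp: length_Suc_conv image_iff)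

lemma sum_Xs_Suc:
  "(\<Sum>x\<in>Xs m n (Suc j). F x) = (\<Sum>a\<in>{1..m+n}. \<Sum>x\<in>Xs m n j. F (a # x))"
proof -
  have inj: "inj_on (\<lambda>(a, x). a # x) ({1..m+n} \<times> Xs m n j)" by (auto simp: inj_on_def)
  have "(\<Sum>x\<in>Xs m n (Suc j). F x) = (\<Sum>p\<in>{1..m+n} \<times> Xs m n j. F ((\<lambda>(a, x). a # x) p))"
    unfolding Xs_Suc by (rule sum.reindex[OF inj, unfolded comp_def])
  also have "\<dots> = (\<Sum>a\<in>{1..m+n}. \<Sum>x\<in>Xs m n j. F (a # x))"
    by (simp add: sum.cartesian_product split_def)
  finally show ?thesis .
qed

lemma Nlemma:
  assumes "j \<le> L" "L \<le> N" "f \<in> FL m n N L"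
  shows "(\<lambda>y. (\<Sum>x\<in>Xs m n j. Nop m n x f y) - of_nat (cc j L) * f y) \<in> RelL m n N L"
  using assms
proof (induction j arbitrary: L f)
  case 0
  have "Xs m n 0 = {[]}" unfolding Xs_def by auto
  then show ?case using csub_zero[OF csub_RelL] by simp
next
  case (Suc j)
  define L' where "L' = L - 1"
  have L: "L = Suc L'" using Suc.prems unfolding L'_def by simp
  define g where "g a = L_dual m n (ind a) f" for a
  have gFL: "g a \<in> FL m n N L'" for a
    unfolding g_def L'_def by (rule L_dual_FL[OF Suc.prems(3,2)])
  have gfs: "fsupp (g a)" for a using FL_fsupp[OF gFL] .
  have IH: "(\<lambda>y. (\<Sum>x\<in>Xs m n j. Nop m n x (g a) y) - of_nat (cc j L') * g a y) \<in> RelL m n N L'" for a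
    by (rule Suc.IH) (use Suc.prems L gFL in auto)
  have V1: "L_vec m n (ind a) (\<lambda>y. (\<Sum>x\<in>Xs m n j. Nop m n x (g a) y) - of_nat (cc j L') * g a y)
      = (\<lambda>y. (\<Sum>x\<in>Xs m n j. L_vec m n (ind a) (Nop m n x (g a)) y) - of_nat (cc j L') * L_vec m n (ind a) (g a) y)" for a
  proof -
    have fs: "fsupp (\<lambda>y. \<Sum>x\<in>Xs m n j. Nop m n x (g a) y)"
      using gfs by (intro fsupp_sum finite_Xs) (auto intro: linopD1[OF linop_Nop])
    show ?thesis
      by (simp add: linop_diff[OF linop_L_vec fs] linopD3[OF linop_L_vec] gfs
          linop_sum'[OF linop_L_vec finite_Xs] linopD1[OF linop_Nop])
  qed
  have V: "(\<lambda>y. \<Sum>a\<in>{1..m+n}. ((\<Sum>x\<in>Xs m n j. L_vec m n (ind a) (Nop m n x (g a)) y) - of_nat (cc j L') * L_vec m n (ind a) (g a) y))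
      \<in> RelL m n N L"
  proof (rule csub_sum'[OF csub_RelL], simp)
    fix a
    show "(\<lambda>y. (\<Sum>x\<in>Xs m n j. L_vec m n (ind a) (Nop m n x (g a)) y) - of_nat (cc j L') * L_vec m n (ind a) (g a) y) \<in> RelL m n N L"
      using L_vec_RelL[OF IH[of a], of "ind a"] unfolding V1 L by simp
  qed
  have W: "(\<lambda>y. of_nat (cc j L') * Ostep m n L f y) \<in> RelL m n N L"
    by (rule csub_scale[OF csub_RelL one_step[OF Suc.prems(3,2)]])
  have E: "(\<lambda>y. (\<Sum>x\<in>Xs m n (Suc j). Nop m n x f y) - of_nat (cc (Suc j) L) * f y)
     = (\<lambda>y. (\<Sum>a\<in>{1..m+n}. ((\<Sum>x\<in>Xs m n j. L_vec m n (ind a) (Nop m n x (g a)) y) - of_nat (cc j L') * L_vec m n (ind a) (g a) y))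
          + of_nat (cc j L') * Ostep m n L f y)"
    unfolding sum_Xs_Suc Ostep_def g_def
    by (simp add: sum_subtractf sum_distrib_left algebra_simps L'_def)
  show ?case unfolding E by (rule csub_add[OF csub_RelL V W])
qed

lemma Nlemma_d:
  assumes "d \<le> N" "f \<in> FL m n N d"
  shows "(\<lambda>y. (\<Sum>x\<in>Xs m n d. Nop m n x f y) - fact d * f y) \<in> RelL m n N d"
  using Nlemma[OF order_refl assms] unfolding cc_fact by simp


lemma length_del[simp]: "p < length xs \<Longrightarrow> length (del p xs) = length xs - 1"
  unfolding del_def by simp

lemma nth_del: "p < length xs \<Longrightarrow> j < length xs - 1 \<Longrightarrow> del p xs ! j = (if j < p then xs ! j else xs ! Suc j)"
  unfolding del_def by (auto simp: nth_append min_def)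

lemma set_del: "set (del p xs) \<subseteq> set xs"
  unfolding del_def by (auto dest: in_set_takeD in_set_dropD)

lemma filter_swap:
  assumes "Suc q < length u"
  shows "length (filter P (u[q := u ! Suc q, Suc q := u ! q])) = length (filter P u)"
proof -
  have u: "u = take q u @ u ! q # u ! Suc q # drop (Suc (Suc q)) u"
    using assms by (metis Suc_lessD id_take_nth_drop Cons_nth_drop_Suc)
  have "u[q := u ! Suc q, Suc q := u ! q] = take q u @ u ! Suc q # u ! q # drop (Suc (Suc q)) u"
    using assms by (subst u) (simp add: list_update_append min_def)
  then show ?thesis by (subst (2) u) simp
qed

lemma LDB_rel:
  assumes zI: "(z, \<tau>) \<in> Idx m n N L" and i: "1 \<le> i" "i < L" and LN: "L \<le> N"
  defines "q \<equiv> L - i - 1"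
  defines "z' \<equiv> z[q := z ! Suc q, Suc q := z ! q]"
  defines "\<epsilon> \<equiv> (if is_odd m (z ! q) \<and> is_odd m (z ! Suc q) then -1 else 1 :: complex)"
  shows "(\<lambda>y. \<epsilon> * L_dual_basis m a (z', \<tau>) y - L_dual_basis m a (z, s i \<circ> \<tau>) y) \<in> RelL m n N (L - 1)"
proof -
  have len: "length z = L" using zI by (auto simp: Idx_def)
  have len': "length z' = L" unfolding z'_def using len by simp
  have setz: "set z \<subseteq> {1..m+n}" using zI by (auto simp: Idx_def)
  have \<tau>: "\<tau> permutes {1..N}" using zI by (auto simp: Idx_def)
  have q: "Suc q < L" "L - q = Suc i" using i unfolding q_def by auto
  have z'nth: "z' ! j = (if j = q then z ! Suc q else if j = Suc q then z ! q else z ! j)" if "j < L" for j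
    using that q len unfolding z'_def by (auto simp: nth_list_update)
  define cf where "cf w p = (if w ! p = a then sg m a (take p w) else 0)" for w p
  define T where "T w \<sigma> p = (\<lambda>y. cf w p * delta (del p w, cyc (L - p) L \<circ> \<sigma>) y)" for w \<sigma> p
  define h where "h p = (\<lambda>y. \<epsilon> * T z' \<tau> p y - T z (s i \<circ> \<tau>) p y)" for p
  have E: "(\<lambda>y. \<epsilon> * L_dual_basis m a (z', \<tau>) y - L_dual_basis m a (z, s i \<circ> \<tau>) y)
      = (\<lambda>y. \<Sum>p\<in>{0..<L}. h p y)"
    unfolding LDB_eq' len len' h_def T_def cf_def by (simp add: sum_subtractf sum_distrib_left mult_ac)
  have split: "(\<Sum>p\<in>{0..<L}. h p y) = (\<Sum>p\<in>{0..<L} - {q, Suc q}. h p y) + (h q y + h (Suc q) y)" for y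
  proof -
    have "(\<Sum>p\<in>{0..<L}. h p y) = (\<Sum>p\<in>{0..<L} - {q, Suc q}. h p y) + (\<Sum>p\<in>{q, Suc q}. h p y)"
      using q by (intro sum.subset_diff) auto
    then show ?thesis by simp
  qed
  \<comment> \<open>the two middle terms cancel\<close>
  have del1: "del (Suc q) z' = del q z"
    using q len len' by (intro nth_equalityI) (auto simp: nth_del z'nth less_Suc_eq)
  have del2: "del q z' = del (Suc q) z"
    using q len len' by (intro nth_equalityI) (auto simp: nth_del z'nth less_Suc_eq)
  have tk1: "take (Suc q) z' = take q z @ [z ! Suc q]"
    using q len unfolding z'_def by (simp add: take_Suc_conv_app_nth nth_list_update)
  have tk2: "take (Suc q) z = take q z @ [z ! q]"
    using q len by (simp add: take_Suc_conv_app_nth)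
  have tk0: "take q z' = take q z" unfolding z'_def by simp
  have cy1: "cyc i L = cyc (Suc i) L \<circ> s i" by (rule cyc_step) (use i in auto)
  have cy2: "cyc i L \<circ> (s i \<circ> \<tau>) = cyc (Suc i) L \<circ> \<tau>"
  proof -
    have "s i (s i x) = x" for x by (simp add: s_def)
    then show ?thesis unfolding cy1 by (simp add: fun_eq_iff)
  qed
  have Lq1: "L - Suc q = i" using q by simp
  have mid: "h q y + h (Suc q) y = 0" for y
  proof -
    have A: "\<epsilon> * T z' \<tau> (Suc q) y = T z (s i \<circ> \<tau>) q y"
      unfolding T_def cf_def del1 tk1 Lq1 q(2) cy1 sg_snoc \<epsilon>_def
      using q len by (auto simp: z'nth comp_assoc)
    have B: "\<epsilon> * T z' \<tau> q y = T z (s i \<circ> \<tau>) (Suc q) y"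
      unfolding T_def cf_def del2 tk2 tk0 Lq1 q(2) cy2 sg_snoc \<epsilon>_def
      using q len by (auto simp: z'nth)
    show ?thesis unfolding h_def using A B by simp
  qed
  \<comment> \<open>the remaining terms are relations\<close>
  have rest: "(\<lambda>y. \<Sum>p\<in>{0..<L} - {q, Suc q}. h p y) \<in> RelL m n N (L - 1)"
  proof (rule csub_sum'[OF csub_RelL])
    show "finite ({0..<L} - {q, Suc q})" by simp
    fix p assume p: "p \<in> {0..<L} - {q, Suc q}"
    then have pL: "p < L" by simp
    define w where "w = del p z"
    define \<sigma> where "\<sigma> = cyc (L - p) L \<circ> \<tau>"
    have lw: "length w = L - 1" unfolding w_def using pL len by simp
    have \<sigma>p: "\<sigma> permutes {1..N}" unfolding \<sigma>_def using \<tau> LN pL by (intro permutes_compose cyc_permutes) auto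
    have wI: "(w, \<sigma>) \<in> Idx m n N (L - 1)" using lw \<sigma>p setz set_del[of p z] unfolding w_def by (auto simp: Idx_def)
    have cfe: "cf z' p = cf z p"
    proof (cases "p < q")
      case True
      then show ?thesis unfolding cf_def z'_def using len q by (simp add: nth_list_update)
    next
      case False
      then have pq: "Suc (Suc q) \<le> p" using p by auto
      have "take p z' = (take p z)[q := take p z ! Suc q, Suc q := take p z ! q]"
        unfolding z'_def using pq by (simp add: take_update_swap)
      then have "length (filter (is_odd m) (take p z')) = length (filter (is_odd m) (take p z))"
        using filter_swap[of q "take p z"] pq pL len by simp
      moreover have "z' ! p = z ! p" using pq pL by (simp add: z'nth)
      ultimately show ?thesis unfolding cf_def sg_def by simp
    qed
    show "h p \<in> RelL m n N (L - 1)"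
    proof (cases "p < q")
      case True
      define i' where "i' = i"
      have e: "L - 1 - i' - 1 = q - 1" unfolding i'_def q_def by simp
      have dz': "del p z' = w[q - 1 := w ! Suc (q - 1), Suc (q - 1) := w ! (q - 1)]"
        unfolding w_def using True q len len' by (intro nth_equalityI) (auto simp: nth_del z'nth nth_list_update less_Suc_eq)
      have wn: "w ! (q - 1) = z ! q" "w ! Suc (q - 1) = z ! Suc q"
        unfolding w_def using True q len by (auto simp: nth_del)
      have cyh: "cyc (L - p) L \<circ> (s i \<circ> \<tau>) = s i \<circ> \<sigma>"
        unfolding \<sigma>_def using cyc_s_high[of i "L - p" L] True q by (simp add: comp_assoc[symmetric] q_def)
      have "h p = (\<lambda>y. cf z p * rel m i' (w, \<sigma>) y)"
        unfolding h_def T_def rel_eq lw e wn dz' cfe cyh using True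
        by (auto simp: \<epsilon>_def w_def \<sigma>_def i'_def algebra_simps)
      moreover have "rel m i' (w, \<sigma>) \<in> RelL m n N (L - 1)"
        by (rule rel_in_RelL[OF wI]) (use i True q in \<open>auto simp: i'_def q_def\<close>)
      ultimately show ?thesis using csub_scale[OF csub_RelL] by simp
    next
      case False
      then have pq: "Suc (Suc q) \<le> p" using p by auto
      define i' where "i' = i - 1"
      have e: "L - 1 - i' - 1 = q" unfolding i'_def q_def using i pq pL q by simp
      have dz': "del p z' = w[q := w ! Suc q, Suc q := w ! q]"
        unfolding w_def using pq q len len' pL by (intro nth_equalityI) (auto simp: nth_del z'nth nth_list_update less_Suc_eq)
      have wn: "w ! q = z ! q" "w ! Suc q = z ! Suc q"
        unfolding w_def using pq q len pL by (auto simp: nth_del)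
      have cyl: "cyc (L - p) L \<circ> (s i \<circ> \<tau>) = s i' \<circ> \<sigma>"
        unfolding \<sigma>_def i'_def using cyc_s_low[of "L - p" i L] pq q i pL
        by (simp add: comp_assoc[symmetric] q_def)
      have "h p = (\<lambda>y. cf z p * rel m i' (w, \<sigma>) y)"
        unfolding h_def T_def rel_eq lw e wn dz' cfe cyl
        by (auto simp: \<epsilon>_def w_def \<sigma>_def algebra_simps)
      moreover have "rel m i' (w, \<sigma>) \<in> RelL m n N (L - 1)"
        by (rule rel_in_RelL[OF wI]) (use i pq pL q in \<open>auto simp: i'_def q_def\<close>)
      ultimately show ?thesis using csub_scale[OF csub_RelL] by simp
    qed
  qed
  show ?thesis unfolding E split mid using rest by simp
qed


lemma L_dual_rel:
  assumes "x \<in> Idx m n N L" "1 \<le> i" "i < L" "L \<le> N"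
  shows "L_dual m n c (rel m i x) \<in> RelL m n N (L - 1)"
proof -
  obtain z \<tau> where xx: "x = (z, \<tau>)" by (cases x)
  have len: "length z = L" using assms xx by (auto simp: Idx_def)
  define q where "q = L - i - 1"
  define z' where "z' = z[q := z ! Suc q, Suc q := z ! q]"
  define \<epsilon> where "\<epsilon> = (if is_odd m (z ! q) \<and> is_odd m (z ! Suc q) then -1 else 1 :: complex)"
  have r: "rel m i (z, \<tau>) = (\<lambda>y. \<epsilon> * delta (z', \<tau>) y - delta (z, s i \<circ> \<tau>) y)"
    unfolding rel_eq len \<epsilon>_def z'_def q_def by simp
  have "L_dual m n c (rel m i x) = (\<lambda>y. \<epsilon> * L_dual m n c (delta (z', \<tau>)) y - L_dual m n c (delta (z, s i \<circ> \<tau>)) y)"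
    unfolding xx r by (simp add: linop_diff[OF linop_L_dual] linopD3[OF linop_L_dual])
  also have "\<dots> = (\<lambda>y. \<Sum>a\<in>{1..m+n}. c a * (\<epsilon> * L_dual_basis m a (z', \<tau>) y - L_dual_basis m a (z, s i \<circ> \<tau>) y))"
    unfolding L_dual_delta by (simp add: sum_distrib_left sum_subtractf algebra_simps)
  also have "\<dots> \<in> RelL m n N (L - 1)"
  proof (rule csub_sum[OF csub_RelL])
    show "finite {1..m+n}" by simp
    fix a
    show "(\<lambda>y. \<epsilon> * L_dual_basis m a (z', \<tau>) y - L_dual_basis m a (z, s i \<circ> \<tau>) y) \<in> RelL m n N (L - 1)"
      unfolding \<epsilon>_def z'_def q_def by (rule LDB_rel) (use assms xx in auto)
  qed
  finally show ?thesis .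
qed

lemma L_dual_RelL:
  assumes "f \<in> RelL m n N L" "L \<le> N" shows "L_dual m n c f \<in> RelL m n N (L - 1)"
  by (rule RelL_linop[OF linop_L_dual assms(1) L_dual_rel csub_RelL]) (use assms(2) in auto)

lemma RelL0: "f \<in> RelL m n N 0 \<Longrightarrow> f = (\<lambda>y. 0)"
  unfolding RelL_def cspan_def by auto

section \<open>composite operators\<close>

lemma fc_Cons: "foldr (\<circ>) (f # fs) id = f \<circ> foldr (\<circ>) fs id"
  by (simp add: fun_eq_iff)
lemma fc_Nil: "foldr (\<circ>) [] id = id" by simp
lemma fc_app: "foldr (\<circ>) (fs @ gs) id = foldr (\<circ>) fs id \<circ> foldr (\<circ>) gs id"
  by (induction fs) (simp_all add: fc_Cons comp_assoc)

lemma vecs_props: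
  fixes m n :: nat and w :: "nat \<Rightarrow> nat \<Rightarrow> complex"
  defines "V js \<equiv> foldr (\<circ>) (map (\<lambda>j. L_vec m n (w j)) js) id"
  shows "linop (V js)"
    and "f \<in> FL m n N L \<Longrightarrow> V js f \<in> FL m n N (L + length js)"
    and "f \<in> RelL m n N L \<Longrightarrow> V js f \<in> RelL m n N (L + length js)"
    and "bij \<rho> \<Longrightarrow> fsupp f \<Longrightarrow> V js (Ur \<rho> f) = Ur \<rho> (V js f)"
proof -
  show l: "linop (V js)" for js
    unfolding V_def by (induction js) (simp_all only: list.map fc_Cons fc_Nil linop_id linop_comp linop_L_vec)
  show "f \<in> FL m n N L \<Longrightarrow> V js f \<in> FL m n N (L + length js)"
    unfolding V_def by (induction js arbitrary: f) (auto intro!: L_vec_FL)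
  show "f \<in> RelL m n N L \<Longrightarrow> V js f \<in> RelL m n N (L + length js)"
    unfolding V_def by (induction js arbitrary: f) (auto intro!: L_vec_RelL)
  show "bij \<rho> \<Longrightarrow> fsupp f \<Longrightarrow> V js (Ur \<rho> f) = Ur \<rho> (V js f)"
  proof (induction js)
    case Nil then show ?case by (simp add: V_def)
  next
    case (Cons j js)
    have "V (j # js) (Ur \<rho> f) = L_vec m n (w j) (V js (Ur \<rho> f))" unfolding V_def by simp
    also have "\<dots> = L_vec m n (w j) (Ur \<rho> (V js f))" using Cons by simp
    also have "\<dots> = Ur \<rho> (L_vec m n (w j) (V js f))"
      by (rule L_vec_Ur) (use Cons linopD1[OF l] in auto)
    finally show ?case unfolding V_def by simp
  qed
qed

lemma duals_props:
  fixes m n :: nat and v :: "nat \<Rightarrow> nat \<Rightarrow> complex"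
  defines "D js \<equiv> foldr (\<circ>) (map (\<lambda>j. L_dual m n (v j)) js) id"
  shows "linop (D js)"
    and "f \<in> FL m n N L \<Longrightarrow> L \<le> N \<Longrightarrow> D js f \<in> FL m n N (L - length js)"
    and "f \<in> RelL m n N L \<Longrightarrow> L \<le> N \<Longrightarrow> D js f \<in> RelL m n N (L - length js)"
    and "bij \<rho> \<Longrightarrow> fsupp f \<Longrightarrow> D js (Ur \<rho> f) = Ur \<rho> (D js f)"
proof -
  show l: "linop (D js)" for js
    unfolding D_def by (induction js) (simp_all only: list.map fc_Cons fc_Nil linop_id linop_comp linop_L_dual)
  show "f \<in> FL m n N L \<Longrightarrow> L \<le> N \<Longrightarrow> D js f \<in> FL m n N (L - length js)"
  proof (induction js)
    case Nil then show ?case by (simp add: D_def)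
  next
    case (Cons j js)
    have "D (j # js) f = L_dual m n (v j) (D js f)" unfolding D_def by simp
    moreover have "L_dual m n (v j) (D js f) \<in> FL m n N (L - length js - 1)"
      by (rule L_dual_FL) (use Cons in auto)
    ultimately show ?case by simp
  qed
  show "f \<in> RelL m n N L \<Longrightarrow> L \<le> N \<Longrightarrow> D js f \<in> RelL m n N (L - length js)"
  proof (induction js)
    case Nil then show ?case by (simp add: D_def)
  next
    case (Cons j js)
    have "D (j # js) f = L_dual m n (v j) (D js f)" unfolding D_def by simp
    moreover have "L_dual m n (v j) (D js f) \<in> RelL m n N (L - length js - 1)"
      by (rule L_dual_RelL) (use Cons in auto)
    ultimately show ?case by simp
  qed
  show "bij \<rho> \<Longrightarrow> fsupp f \<Longrightarrow> D js (Ur \<rho> f) = Ur \<rho> (D js f)"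
  proof (induction js)
    case Nil then show ?case by (simp add: D_def)
  next
    case (Cons j js)
    have "D (j # js) (Ur \<rho> f) = L_dual m n (v j) (D js (Ur \<rho> f))" unfolding D_def by simp
    also have "\<dots> = L_dual m n (v j) (Ur \<rho> (D js f))" using Cons by simp
    also have "\<dots> = Ur \<rho> (L_dual m n (v j) (D js f))"
      by (rule L_dual_Ur) (use Cons linopD1[OF l] in auto)
    finally show ?case unfolding D_def by simp
  qed
qed

definition Gen :: "nat \<Rightarrow> nat \<Rightarrow> nat \<Rightarrow> (nat \<Rightarrow> nat \<Rightarrow> complex) \<Rightarrow> (nat \<Rightarrow> nat) \<Rightarrow> (nat \<Rightarrow> nat \<Rightarrow> complex) \<Rightarrow> vec \<Rightarrow> vec" where
  "Gen m n d w \<rho> v = foldr (\<circ>)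
        (map (\<lambda>j. L_vec m n (w j)) (rev [1..<d+1]) @ [L_perm \<rho>] @ map (\<lambda>j. L_dual m n (v j)) [1..<d+1]) id"

lemma A_gens_Gen: "A_gens m n d k = {Gen m n d w \<rho> v | w \<rho> v. \<rho> permutes {1..d+k}}"
  unfolding A_gens_def Gen_def by simp

lemma Gen_split: "Gen m n d w \<rho> v = foldr (\<circ>) (map (\<lambda>j. L_vec m n (w j)) (rev [1..<d+1])) id \<circ> L_perm \<rho>
      \<circ> foldr (\<circ>) (map (\<lambda>j. L_dual m n (v j)) [1..<d+1]) id"
  unfolding Gen_def by (simp only: fc_app fc_Cons fc_Nil comp_id comp_assoc)

lemma Gen_props:
  assumes "\<rho> permutes {1..N}" "d \<le> N"
  shows "linop (Gen m n d w \<rho> v)"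
    and "f \<in> FL m n N d \<Longrightarrow> Gen m n d w \<rho> v f \<in> FL m n N d"
    and "f \<in> RelL m n N d \<Longrightarrow> Gen m n d w \<rho> v f = (\<lambda>y. 0)"
    and "bij \<rho>' \<Longrightarrow> fsupp f \<Longrightarrow> Gen m n d w \<rho> v (Ur \<rho>' f) = Ur \<rho>' (Gen m n d w \<rho> v f)"
proof -
  let ?V = "foldr (\<circ>) (map (\<lambda>j. L_vec m n (w j)) (rev [1..<d+1])) id"
  let ?D = "foldr (\<circ>) (map (\<lambda>j. L_dual m n (v j)) [1..<d+1]) id"
  have G: "Gen m n d w \<rho> v f = ?V (L_perm \<rho> (?D f))" for f unfolding Gen_split by simp
  show l: "linop (Gen m n d w \<rho> v)" unfolding Gen_split
    by (intro linop_comp vecs_props(1) duals_props(1) linop_L_perm)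
  show "f \<in> FL m n N d \<Longrightarrow> Gen m n d w \<rho> v f \<in> FL m n N d"
  proof -
    assume f: "f \<in> FL m n N d"
    have "?D f \<in> FL m n N (d - length [1..<d+1])" by (rule duals_props(2)[OF f assms(2)])
    then have "?D f \<in> FL m n N 0" by simp
    then have "L_perm \<rho> (?D f) \<in> FL m n N 0" by (rule L_perm_FL[OF _ assms(1)])
    then have "?V (L_perm \<rho> (?D f)) \<in> FL m n N (0 + length (rev [1..<d+1]))" by (rule vecs_props(2))
    moreover have "0 + length (rev [1..<d+1]) = d" by simp
    ultimately show ?thesis unfolding G by (simp only:)
  qed
  show "f \<in> RelL m n N d \<Longrightarrow> Gen m n d w \<rho> v f = (\<lambda>y. 0)"
  proof -
    assume f: "f \<in> RelL m n N d"
    have "?D f \<in> RelL m n N (d - length [1..<d+1])" by (rule duals_props(3)[OF f assms(2)])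
    then have "?D f = (\<lambda>y. 0)" by (intro RelL0) simp
    then show ?thesis unfolding G
      using linop_zero[OF linop_L_perm] linop_zero[OF vecs_props(1)] by simp
  qed
  show "bij \<rho>' \<Longrightarrow> fsupp f \<Longrightarrow> Gen m n d w \<rho> v (Ur \<rho>' f) = Ur \<rho>' (Gen m n d w \<rho> v f)"
  proof -
    assume b: "bij \<rho>'" and f: "fsupp f"
    have fs: "fsupp (?D f)" by (rule linopD1[OF duals_props(1) f])
    have "Gen m n d w \<rho> v (Ur \<rho>' f) = ?V (L_perm \<rho> (Ur \<rho>' (?D f)))"
      unfolding G duals_props(4)[OF b f] ..
    also have "\<dots> = ?V (Ur \<rho>' (L_perm \<rho> (?D f)))" by (simp only: L_perm_Ur[OF b fs])
    also have "\<dots> = Ur \<rho>' (?V (L_perm \<rho> (?D f)))"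
      by (rule vecs_props(4)[OF b]) (rule linopD1[OF linop_L_perm fs])
    finally show ?thesis unfolding G .
  qed
qed


definition Ucomm :: "nat \<Rightarrow> (vec \<Rightarrow> vec) \<Rightarrow> bool" where
  "Ucomm N T \<longleftrightarrow> (\<forall>\<rho> f. \<rho> \<in> Pm N \<longrightarrow> fsupp f \<longrightarrow> T (Ur \<rho> f) = Ur \<rho> (T f))"

lemma Ucomm_R_mult:
  assumes "linop T" "Ucomm (d+k) T" "fsupp f"
  shows "T (R_mult d k c f) = R_mult d k c (T f)"
proof -
  have "T (R_mult d k c f) = T (\<lambda>y. \<Sum>\<rho>\<in>Pm (d+k). c \<rho> * Ur \<rho> f y)" unfolding R_mult_Ur[OF assms(3)] ..
  also have "\<dots> = (\<lambda>y. \<Sum>\<rho>\<in>Pm (d+k). c \<rho> * T (Ur \<rho> f) y)"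
    by (rule linop_sum[OF assms(1) finite_Pm]) (use assms(3) Pm_bij fsupp_Ur in auto)
  also have "\<dots> = (\<lambda>y. \<Sum>\<rho>\<in>Pm (d+k). c \<rho> * Ur \<rho> (T f) y)"
    using assms(2,3) unfolding Ucomm_def by simp
  also have "\<dots> = R_mult d k c (T f)" unfolding R_mult_Ur[OF linopD1[OF assms(1,3)]] ..
  finally show ?thesis .
qed

lemma gen_props:
  assumes "g \<in> A_gens m n d k"
  shows "linop g" "f \<in> FL m n (d+k) d \<Longrightarrow> g f \<in> FL m n (d+k) d"
    "f \<in> RelL m n (d+k) d \<Longrightarrow> g f = (\<lambda>y. 0)" "Ucomm (d+k) g"
proof -
  obtain w \<rho> v where g: "g = Gen m n d w \<rho> v" "\<rho> permutes {1..d+k}"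
    using assms unfolding A_gens_Gen by blast
  have dN: "d \<le> d + k" by simp
  show "linop g" unfolding g(1) by (rule Gen_props(1)[OF g(2) dN])
  show "f \<in> FL m n (d+k) d \<Longrightarrow> g f \<in> FL m n (d+k) d" unfolding g(1) by (rule Gen_props(2)[OF g(2) dN])
  show "f \<in> RelL m n (d+k) d \<Longrightarrow> g f = (\<lambda>y. 0)" unfolding g(1) by (rule Gen_props(3)[OF g(2) dN])
  show "Ucomm (d+k) g" unfolding Ucomm_def g(1) using Gen_props(4)[OF g(2) dN] Pm_bij by blast
qed

lemma alg_props:
  assumes "A \<in> A_alg m n d k"
  shows "linop A" "f \<in> FL m n (d+k) d \<Longrightarrow> A f \<in> FL m n (d+k) d"
    "f \<in> RelL m n (d+k) d \<Longrightarrow> A f = (\<lambda>y. 0)" "Ucomm (d+k) A"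
proof -
  obtain S c where S: "finite S" "S \<subseteq> A_gens m n d k" "A = (\<lambda>f y. \<Sum>g\<in>S. c g * g f y)"
    using assms unfolding A_alg_def cspan_op_def by blast
  have gp: "g \<in> S \<Longrightarrow> g \<in> A_gens m n d k" for g using S(2) by blast
  show "linop A" unfolding S(3) by (rule linop_comb[OF S(1)]) (use gp gen_props(1) in blast)
  show "f \<in> FL m n (d+k) d \<Longrightarrow> A f \<in> FL m n (d+k) d"
    unfolding S(3) by (rule csub_sum[OF csub_FL S(1)]) (use gp gen_props(2) in blast)
  show "f \<in> RelL m n (d+k) d \<Longrightarrow> A f = (\<lambda>y. 0)"
  proof -
    assume f: "f \<in> RelL m n (d+k) d"
    have "g f = (\<lambda>y. 0)" if "g \<in> S" for g using gen_props(3)[OF gp[OF that] f] .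
    then show ?thesis unfolding S(3) by simp
  qed
  show "Ucomm (d+k) A" unfolding Ucomm_def
  proof (intro allI impI)
    fix \<rho> f assume \<rho>: "\<rho> \<in> Pm (d+k)" and f: "fsupp f"
    have "g (Ur \<rho> f) = Ur \<rho> (g f)" if "g \<in> S" for g
      using gen_props(4)[OF gp[OF that]] \<rho> f unfolding Ucomm_def by blast
    then show "A (Ur \<rho> f) = Ur \<rho> (A f)" unfolding S(3) by (simp add: Ur_sum Ur_scale)
  qed
qed

lemma W_endo_linop:
  assumes "linop T" "\<And>f. f \<in> FL m n (d+k) d \<Longrightarrow> T f \<in> FL m n (d+k) d"
    "\<And>f. f \<in> RelL m n (d+k) d \<Longrightarrow> T f \<in> RelL m n (d+k) d"
  shows "W_endo m n d k T"
  unfolding W_endo_def W_free_FL W_rel_RelL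
  using assms FL_fsupp by (auto intro: linopD2 linopD3)

lemma W_commute_eq:
  assumes "\<And>f. f \<in> FL m n (d+k) d \<Longrightarrow> T (U f) = U (T f)"
  shows "W_commute m n d k T U"
  unfolding W_commute_def W_eq_def W_free_FL W_rel_RelL
  using assms csub_zero[OF csub_RelL] by simp

theorem part1:
  "\<forall>A\<in>A_alg m n d k. W_endo m n d k A \<and> (\<forall>c. W_commute m n d k A (R_mult d k c))"
proof (intro ballI conjI allI)
  fix A assume A: "A \<in> A_alg m n d k"
  show "W_endo m n d k A"
    by (rule W_endo_linop[OF alg_props(1)[OF A] alg_props(2)[OF A]])
       (simp_all add: alg_props(3)[OF A] csub_zero[OF csub_RelL])
  fix c show "W_commute m n d k A (R_mult d k c)"
    by (rule W_commute_eq) (use Ucomm_R_mult[OF alg_props(1,4)[OF A]] FL_fsupp in auto)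
qed

lemma Ur_rel: "bij \<rho> \<Longrightarrow> Ur \<rho> (rel m i (xs, \<sigma>)) = rel m i (xs, \<sigma> \<circ> \<rho>)"
  unfolding rel_eq by (simp add: Ur_diff Ur_scale Ur_delta comp_assoc)

lemma R_mult_FL: "f \<in> FL m n (d+k) L \<Longrightarrow> R_mult d k c f \<in> FL m n (d+k) L"
  unfolding R_mult_Ur[OF FL_fsupp]
  by (rule csub_sum[OF csub_FL finite_Pm]) (auto intro: FL_Ur)

lemma R_mult_RelL: "f \<in> RelL m n (d+k) L \<Longrightarrow> R_mult d k c f \<in> RelL m n (d+k) L"
proof (rule RelL_linop[OF linop_R_mult _ _ csub_RelL])
  fix i x assume x: "x \<in> Idx m n (d+k) L" "1 \<le> i" "i < L"
  obtain xs \<sigma> where xx: "x = (xs, \<sigma>)" by (cases x)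
  show "R_mult d k c (rel m i x) \<in> RelL m n (d+k) L"
    unfolding R_mult_Ur[OF rel_fsupp]
  proof (rule csub_sum[OF csub_RelL finite_Pm])
    fix \<rho> assume \<rho>: "\<rho> \<in> Pm (d+k)"
    have "(xs, \<sigma> \<circ> \<rho>) \<in> Idx m n (d+k) L" using x xx \<rho>
      by (auto simp: Idx_def Pm_def intro: permutes_compose)
    then show "Ur \<rho> (rel m i x) \<in> RelL m n (d+k) L"
      unfolding xx Ur_rel[OF Pm_bij[OF \<rho>]] using x by (intro rel_in_RelL) auto
  qed
qed

theorem part3:
  "\<forall>c. W_endo m n d k (R_mult d k c) \<and> (\<forall>A\<in>A_alg m n d k. W_commute m n d k (R_mult d k c) A)"
proof (intro allI ballI conjI)
  fix c
  show "W_endo m n d k (R_mult d k c)"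
    by (rule W_endo_linop[OF linop_R_mult R_mult_FL R_mult_RelL])
  fix A assume A: "A \<in> A_alg m n d k"
  show "W_commute m n d k (R_mult d k c) A"
    by (rule W_commute_eq) (use Ucomm_R_mult[OF alg_props(1,4)[OF A]] FL_fsupp in auto)
qed


fun LVg :: "nat \<Rightarrow> nat \<Rightarrow> nat list \<Rightarrow> vec \<Rightarrow> vec" where
  "LVg m n [] = id"
| "LVg m n (a # t) = L_vec m n (ind a) \<circ> LVg m n t"

fun LDg :: "nat \<Rightarrow> nat \<Rightarrow> nat list \<Rightarrow> vec \<Rightarrow> vec" where
  "LDg m n [] = id"
| "LDg m n (a # t) = LDg m n t \<circ> L_dual m n (ind a)"

lemma Nop_eq: "Nop m n x = LVg m n x \<circ> LDg m n x"
  by (induction x) (simp_all add: comp_assoc)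

lemma linop_LVg: "linop (LVg m n x)"
  by (induction x) (simp_all only: LVg.simps linop_id linop_comp linop_L_vec)

lemma linop_LDg: "linop (LDg m n x)"
  by (induction x) (simp_all only: LDg.simps linop_id linop_comp linop_L_dual)

lemma LDg_FL: "f \<in> FL m n N L \<Longrightarrow> L \<le> N \<Longrightarrow> LDg m n x f \<in> FL m n N (L - length x)"
proof (induction x arbitrary: f L)
  case Nil then show ?case by simp
next
  case (Cons a x)
  have "L_dual m n (ind a) f \<in> FL m n N (L - 1)" by (rule L_dual_FL[OF Cons.prems])
  then have "LDg m n x (L_dual m n (ind a) f) \<in> FL m n N (L - 1 - length x)"
    by (rule Cons.IH) (use Cons.prems in auto)
  then show ?case by simp
qed

lemma LVg_delta0: "set x \<subseteq> {1..m+n} \<Longrightarrow> LVg m n x (delta (u, \<pi>)) = delta (x @ u, \<pi>)"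
  by (induction x) (auto simp: L_vec_ind_delta)

lemma V_list:
  "foldr (\<circ>) (map (\<lambda>j. L_vec m n (ind (xs ! (length xs - j)))) (rev [1..<length xs + 1])) id = LVg m n xs"
proof (induction xs)
  case Nil then show ?case by simp
next
  case (Cons a t)
  let ?L = "length t"
  have u: "[1..<length (a # t) + 1] = [1..<?L + 1] @ [Suc ?L]" by simp
  have m: "map (\<lambda>j. L_vec m n (ind ((a # t) ! (length (a # t) - j)))) (rev [1..<?L + 1])
      = map (\<lambda>j. L_vec m n (ind (t ! (?L - j)))) (rev [1..<?L + 1])"
  proof (rule map_cong[OF refl])
    fix j assume "j \<in> set (rev [1..<?L + 1])"
    then have "1 \<le> j" "j \<le> ?L" by auto
    then have "length (a # t) - j = Suc (?L - j)" by simp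
    then show "L_vec m n (ind ((a # t) ! (length (a # t) - j))) = L_vec m n (ind (t ! (?L - j)))" by simp
  qed
  show ?case unfolding u rev_append
    by (simp only: list.map rev.simps append.simps fc_Cons m Cons.IH) simp
qed

lemma D_list:
  "foldr (\<circ>) (map (\<lambda>j. L_dual m n (ind (xs ! (length xs - j)))) [1..<length xs + 1]) id = LDg m n xs"
proof (induction xs)
  case Nil then show ?case by simp
next
  case (Cons a t)
  let ?L = "length t"
  have u: "[1..<length (a # t) + 1] = [1..<?L + 1] @ [Suc ?L]" by simp
  have m: "map (\<lambda>j. L_dual m n (ind ((a # t) ! (length (a # t) - j)))) [1..<?L + 1]
      = map (\<lambda>j. L_dual m n (ind (t ! (?L - j)))) [1..<?L + 1]"
  proof (rule map_cong[OF refl])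
    fix j assume "j \<in> set [1..<?L + 1]"
    then have "1 \<le> j" "j \<le> ?L" by auto
    then have "length (a # t) - j = Suc (?L - j)" by simp
    then show "L_dual m n (ind ((a # t) ! (length (a # t) - j))) = L_dual m n (ind (t ! (?L - j)))" by simp
  qed
  show ?case unfolding u map_append m Cons.IH fc_app
    by (simp add: fc_Cons)
qed

definition wl :: "nat \<Rightarrow> nat list \<Rightarrow> nat \<Rightarrow> nat \<Rightarrow> complex" where
  "wl d y = (\<lambda>j. ind (y ! (d - j)))"

lemma Gen_wl:
  assumes "length y = d" "length x = d"
  shows "Gen m n d (wl d y) \<sigma> (wl d x) = LVg m n y \<circ> L_perm \<sigma> \<circ> LDg m n x"
proof -
  have "foldr (\<circ>) (map (\<lambda>j. L_vec m n (wl d y j)) (rev [1..<d+1])) id = LVg m n y"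
    using V_list[of m n y] assms(1) unfolding wl_def by simp
  moreover have "foldr (\<circ>) (map (\<lambda>j. L_dual m n (wl d x j)) [1..<d+1]) id = LDg m n x"
    using D_list[of m n x] assms(2) unfolding wl_def by simp
  ultimately show ?thesis unfolding Gen_split by simp
qed


lemma Idx0: "Idx m n N 0 = (\<lambda>\<rho>. ([], \<rho>)) ` Pm N"
  unfolding Idx_def Pm_def by auto

lemma FL0_decomp:
  assumes "f \<in> FL m n N 0"
  shows "f = (\<lambda>z. \<Sum>\<rho>\<in>Pm N. f ([], \<rho>) * delta ([], \<rho>) z)"
proof -
  have "f = (\<lambda>y. \<Sum>x\<in>Idx m n N 0. f x * delta x y)" by (rule FL_decomp[OF assms])
  also have "\<dots> = (\<lambda>z. \<Sum>\<rho>\<in>Pm N. f ([], \<rho>) * delta ([], \<rho>) z)"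
    unfolding Idx0 by (subst sum.reindex) (auto simp: inj_on_def)
  finally show ?thesis .
qed

lemma K2:
  assumes "\<beta> \<in> FL m n N 0" "set x \<subseteq> {1..m+n}"
  shows "LVg m n x \<beta> = (\<lambda>z. \<Sum>\<rho>\<in>Pm N. \<beta> ([], \<rho>) * delta (x, \<rho>) z)"
proof -
  have "LVg m n x \<beta> = LVg m n x (\<lambda>z. \<Sum>\<rho>\<in>Pm N. \<beta> ([], \<rho>) * delta ([], \<rho>) z)"
    by (rule arg_cong[OF FL0_decomp[OF assms(1)]])
  also have "\<dots> = (\<lambda>z. \<Sum>\<rho>\<in>Pm N. \<beta> ([], \<rho>) * LVg m n x (delta ([], \<rho>)) z)"
    by (rule linop_sum[OF linop_LVg finite_Pm]) simp
  also have "\<dots> = (\<lambda>z. \<Sum>\<rho>\<in>Pm N. \<beta> ([], \<rho>) * delta (x, \<rho>) z)"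
    using LVg_delta0[OF assms(2)] by simp
  finally show ?thesis .
qed

lemma Ur_expand:
  assumes "t \<in> FL m n N L" "bij \<rho>"
  shows "Ur \<rho> t = (\<lambda>z. \<Sum>g\<in>Idx m n N L. t g * delta (fst g, snd g \<circ> \<rho>) z)"
proof -
  have "Ur \<rho> t = Ur \<rho> (\<lambda>y. \<Sum>x\<in>Idx m n N L. t x * delta x y)" by (rule arg_cong[OF FL_decomp[OF assms(1)]])
  also have "\<dots> = (\<lambda>z. \<Sum>g\<in>Idx m n N L. t g * delta (fst g, snd g \<circ> \<rho>) z)"
    unfolding Ur_sum Ur_scale
    by (intro ext sum.cong refl) (auto simp: Ur_delta[OF assms(2)] split: prod.splits)
  finally show ?thesis .
qed

lemma K1:
  assumes "t \<in> FL m n N L" "f0 \<in> FL m n N 0"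
  shows "(\<lambda>z. \<Sum>g\<in>Idx m n N L. t g * LVg m n (fst g) (L_perm (snd g) f0) z)
       = (\<lambda>z. \<Sum>\<rho>\<in>Pm N. f0 ([], \<rho>) * Ur \<rho> t z)"
proof -
  have a: "LVg m n (fst g) (L_perm (snd g) f0) = (\<lambda>z. \<Sum>\<rho>\<in>Pm N. f0 ([], \<rho>) * delta (fst g, snd g \<circ> \<rho>) z)"
    if g: "g \<in> Idx m n N L" for g
  proof -
    have "LVg m n (fst g) (L_perm (snd g) f0)
        = (LVg m n (fst g) \<circ> L_perm (snd g)) (\<lambda>z. \<Sum>\<rho>\<in>Pm N. f0 ([], \<rho>) * delta ([], \<rho>) z)"
      using arg_cong[OF FL0_decomp[OF assms(2)], of "LVg m n (fst g) \<circ> L_perm (snd g)"] by simp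
    also have "\<dots> = (\<lambda>z. \<Sum>\<rho>\<in>Pm N. f0 ([], \<rho>) * (LVg m n (fst g) \<circ> L_perm (snd g)) (delta ([], \<rho>)) z)"
      by (rule linop_sum[OF linop_comp[OF linop_LVg linop_L_perm] finite_Pm]) simp
    also have "\<dots> = (\<lambda>z. \<Sum>\<rho>\<in>Pm N. f0 ([], \<rho>) * delta (fst g, snd g \<circ> \<rho>) z)"
      using g by (intro ext sum.cong refl) (auto simp: Idx_def L_perm_delta0 LVg_delta0)
    finally show ?thesis .
  qed
  have "(\<lambda>z. \<Sum>g\<in>Idx m n N L. t g * LVg m n (fst g) (L_perm (snd g) f0) z)
     = (\<lambda>z. \<Sum>g\<in>Idx m n N L. \<Sum>\<rho>\<in>Pm N. t g * (f0 ([], \<rho>) * delta (fst g, snd g \<circ> \<rho>) z))"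
    by (intro ext sum.cong refl) (simp add: a sum_distrib_left)
  also have "\<dots> = (\<lambda>z. \<Sum>\<rho>\<in>Pm N. f0 ([], \<rho>) * (\<Sum>g\<in>Idx m n N L. t g * delta (fst g, snd g \<circ> \<rho>) z))"
    by (subst sum.swap) (simp add: sum_distrib_left mult_ac)
  also have "\<dots> = (\<lambda>z. \<Sum>\<rho>\<in>Pm N. f0 ([], \<rho>) * Ur \<rho> t z)"
    by (intro ext sum.cong refl) (simp add: Ur_expand[OF assms(1) Pm_bij])
  finally show ?thesis .
qed

lemma cspan_op_family:
  assumes "finite I" "\<And>i. i \<in> I \<Longrightarrow> G i \<in> Gs"
  shows "(\<lambda>f y. \<Sum>i\<in>I. a i * G i f y) \<in> cspan_op Gs"
proof -
  define c where "c g = (\<Sum>i\<in>{i\<in>I. G i = g}. a i)" for g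
  have "(\<lambda>f y. \<Sum>i\<in>I. a i * G i f y) = (\<lambda>f y. \<Sum>g\<in>G ` I. c g * g f y)"
  proof (intro ext)
    fix f y
    have "(\<Sum>i\<in>I. a i * G i f y) = (\<Sum>g\<in>G ` I. \<Sum>i\<in>{i\<in>I. G i = g}. a i * G i f y)"
      by (rule sum.image_gen[OF assms(1)])
    also have "\<dots> = (\<Sum>g\<in>G ` I. c g * g f y)"
      unfolding c_def sum_distrib_right by (intro sum.cong refl) auto
    finally show "(\<Sum>i\<in>I. a i * G i f y) = (\<Sum>g\<in>G ` I. c g * g f y)" .
  qed
  then show ?thesis unfolding cspan_op_def using assms by blast
qed


lemma Wendo_props:
  assumes "W_endo m n d k T"
  shows "\<And>f. f \<in> FL m n (d+k) d \<Longrightarrow> T f \<in> FL m n (d+k) d"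
    and "\<And>f g. f \<in> FL m n (d+k) d \<Longrightarrow> g \<in> FL m n (d+k) d \<Longrightarrow> T (\<lambda>y. f y + g y) = (\<lambda>y. T f y + T g y)"
    and "\<And>f c. f \<in> FL m n (d+k) d \<Longrightarrow> T (\<lambda>y. c * f y) = (\<lambda>y. c * T f y)"
    and "\<And>r. r \<in> RelL m n (d+k) d \<Longrightarrow> T r \<in> RelL m n (d+k) d"
  using assms unfolding W_endo_def W_free_FL W_rel_RelL by auto

lemma Wendo_sum:
  assumes "W_endo m n d k T" "finite S" "\<And>i. i \<in> S \<Longrightarrow> h i \<in> FL m n (d+k) d"
  shows "T (\<lambda>y. \<Sum>i\<in>S. c i * h i y) = (\<lambda>y. \<Sum>i\<in>S. c i * T (h i) y)"
  using assms(2,3)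
proof (induction S rule: finite_induct)
  case empty
  have "T (\<lambda>y. 0 * (\<lambda>y. 0) y) = (\<lambda>y. 0 * T (\<lambda>y. 0) y)" by (rule Wendo_props(3)[OF assms(1)]) simp
  then show ?case by simp
next
  case (insert x F)
  have "T (\<lambda>y. \<Sum>i\<in>insert x F. c i * h i y) = T (\<lambda>y. (\<lambda>y. c x * h x y) y + (\<lambda>y. \<Sum>i\<in>F. c i * h i y) y)"
    using insert by simp
  also have "\<dots> = (\<lambda>y. T (\<lambda>y. c x * h x y) y + T (\<lambda>y. \<Sum>i\<in>F. c i * h i y) y)"
    using insert by (intro Wendo_props(2)[OF assms(1)] FL_scale csub_sum[OF csub_FL]) auto
  also have "\<dots> = (\<lambda>y. \<Sum>i\<in>insert x F. c i * T (h i) y)"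
    using insert Wendo_props(3)[OF assms(1), of "h x" "c x"] by simp
  finally show ?case .
qed

lemma Wendo_diff:
  assumes "W_endo m n d k T" "f \<in> FL m n (d+k) d" "g \<in> FL m n (d+k) d"
  shows "T (\<lambda>y. f y - g y) = (\<lambda>y. T f y - T g y)"
proof -
  have "T (\<lambda>y. f y - g y) = T (\<lambda>y. \<Sum>i\<in>{True, False}. (if i then 1 else -1) * (if i then f else g) y)"
    by simp
  also have "\<dots> = (\<lambda>y. \<Sum>i\<in>{True, False}. (if i then 1 else -1) * T (if i then f else g) y)"
    by (rule Wendo_sum[OF assms(1)]) (use assms in auto)
  finally show ?thesis by simp
qed

lemma part2_lemma:
  assumes T: "W_endo m n d k T" and C: "\<forall>c. W_commute m n d k T (R_mult d k c)"
  shows "\<exists>A\<in>A_alg m n d k. W_eq m n d k T A"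
proof -
  define N where "N = d + k"
  have dN: "d \<le> N" unfolding N_def by simp
  let ?F = "FL m n N d" and ?R = "RelL m n N d"
  have TF: "f \<in> ?F \<Longrightarrow> T f \<in> ?F" for f using Wendo_props(1)[OF T] unfolding N_def .
  have TR: "r \<in> ?R \<Longrightarrow> T r \<in> ?R" for r using Wendo_props(4)[OF T] unfolding N_def .
  have Tsum: "finite S \<Longrightarrow> (\<And>i. i \<in> S \<Longrightarrow> h i \<in> ?F) \<Longrightarrow> T (\<lambda>y. \<Sum>i\<in>S. c i * h i y) = (\<lambda>y. \<Sum>i\<in>S. c i * T (h i) y)"
    for S h c using Wendo_sum[OF T] unfolding N_def by blast
  have Tdiff: "f \<in> ?F \<Longrightarrow> g \<in> ?F \<Longrightarrow> T (\<lambda>y. f y - g y) = (\<lambda>y. T f y - T g y)" for f g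
    using Wendo_diff[OF T] unfolding N_def by blast
  have Comm: "(\<lambda>y. T (Ur \<rho> f) y - Ur \<rho> (T f) y) \<in> ?R" if \<rho>: "\<rho> \<in> Pm N" and f: "f \<in> ?F" for \<rho> f
  proof -
    have "W_commute m n d k T (R_mult d k (\<lambda>\<rho>'. if \<rho>' = \<rho> then 1 else 0))" using C by blast
    then have "(\<lambda>y. T (R_mult d k (\<lambda>\<rho>'. if \<rho>' = \<rho> then 1 else 0) f) y
        - R_mult d k (\<lambda>\<rho>'. if \<rho>' = \<rho> then 1 else 0) (T f) y) \<in> ?R"
      using f unfolding W_commute_def W_eq_def W_free_FL W_rel_RelL N_def by auto
    moreover have "R_mult d k (\<lambda>\<rho>'. if \<rho>' = \<rho> then 1 else 0) f = Ur \<rho> f"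
      by (rule R_mult_ind) (use f \<rho> FL_fsupp N_def in auto)
    moreover have "R_mult d k (\<lambda>\<rho>'. if \<rho>' = \<rho> then 1 else 0) (T f) = Ur \<rho> (T f)"
      by (rule R_mult_ind) (use TF[OF f] \<rho> FL_fsupp N_def in auto)
    ultimately show ?thesis by simp
  qed
  have idP: "id \<in> Pm N" unfolding Pm_def by (simp add: permutes_id)
  define tt where "tt x = T (delta (x, id))" for x
  have dxI: "(x, \<rho>) \<in> Idx m n N d" if "x \<in> Xs m n d" "\<rho> \<in> Pm N" for x \<rho>
    using that unfolding Xs_def Idx_def Pm_def by auto
  have ttF: "tt x \<in> ?F" if "x \<in> Xs m n d" for x
    unfolding tt_def by (rule TF[OF FL_delta[OF dxI[OF that idP]]])
  define I where "I = Xs m n d \<times> Idx m n N d"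
  have finI: "finite I" unfolding I_def by (simp add: finite_Xs finite_Idx)
  define G where "G p = Gen m n d (wl d (fst (snd p))) (snd (snd p)) (wl d (fst p))" for p :: "nat list \<times> idx"
  define A where "A = (\<lambda>f y. \<Sum>p\<in>I. (tt (fst p) (snd p) / fact d) * G p f y)"
  have AA: "A \<in> A_alg m n d k"
    unfolding A_def A_alg_def
  proof (rule cspan_op_family[OF finI])
    fix p assume "p \<in> I"
    then have "snd (snd p) permutes {1..d+k}" unfolding I_def Idx_def N_def by (auto split: prod.splits)
    then show "G p \<in> A_gens m n d k" unfolding A_gens_Gen G_def by blast
  qed
  have "W_eq m n d k T A"
    unfolding W_eq_def W_free_FL W_rel_RelL N_def[symmetric]
  proof
    fix f assume f: "f \<in> ?F"
    define \<beta> where "\<beta> x = LDg m n x f" for x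
    have \<beta>F: "\<beta> x \<in> FL m n N 0" if "x \<in> Xs m n d" for x
      using LDg_FL[OF f dN, of x] that unfolding \<beta>_def Xs_def by simp
    define K where "K x = (\<lambda>z. \<Sum>\<rho>\<in>Pm N. \<beta> x ([], \<rho>) * Ur \<rho> (tt x) z)" for x
    have Af: "A f = (\<lambda>z. \<Sum>x\<in>Xs m n d. (1 / fact d) * K x z)"
    proof (rule ext)
      fix z
      have "A f z = (\<Sum>x\<in>Xs m n d. \<Sum>g\<in>Idx m n N d. (tt x g / fact d) * G (x, g) f z)"
        unfolding A_def I_def by (simp add: sum.cartesian_product split_def)
      also have "\<dots> = (\<Sum>x\<in>Xs m n d. (1 / fact d) * (\<Sum>g\<in>Idx m n N d. tt x g * LVg m n (fst g) (L_perm (snd g) (\<beta> x)) z))"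
      proof (rule sum.cong[OF refl])
        fix x assume x: "x \<in> Xs m n d"
        have "G (x, g) f = LVg m n (fst g) (L_perm (snd g) (\<beta> x))" if "g \<in> Idx m n N d" for g
          using that x unfolding G_def \<beta>_def Xs_def Idx_def by (auto simp: Gen_wl split: prod.splits)
        then show "(\<Sum>g\<in>Idx m n N d. (tt x g / fact d) * G (x, g) f z)
            = (1 / fact d) * (\<Sum>g\<in>Idx m n N d. tt x g * LVg m n (fst g) (L_perm (snd g) (\<beta> x)) z)"
          by (simp add: sum_distrib_left)
      qed
      also have "\<dots> = (\<Sum>x\<in>Xs m n d. (1 / fact d) * K x z)"
      proof (rule sum.cong[OF refl])
        fix x assume x: "x \<in> Xs m n d"
        show "(1 / fact d) * (\<Sum>g\<in>Idx m n N d. tt x g * LVg m n (fst g) (L_perm (snd g) (\<beta> x)) z)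
            = (1 / fact d) * K x z"
          using fun_cong[OF K1[OF ttF[OF x] \<beta>F[OF x]], of z] unfolding K_def by simp
      qed
      finally show "A f z = (\<Sum>x\<in>Xs m n d. (1 / fact d) * K x z)" .
    qed
    have Nopf: "Nop m n x f = (\<lambda>z. \<Sum>\<rho>\<in>Pm N. \<beta> x ([], \<rho>) * delta (x, \<rho>) z)" if x: "x \<in> Xs m n d" for x
      unfolding Nop_eq \<beta>_def[symmetric] comp_def using K2[OF \<beta>F[OF x]] x unfolding Xs_def by simp
    have NopF: "Nop m n x f \<in> ?F" if x: "x \<in> Xs m n d" for x
      unfolding Nopf[OF x] by (rule csub_sum[OF csub_FL finite_Pm]) (use dxI[OF x] FL_delta in auto)
    have D1: "(\<lambda>z. T (Nop m n x f) z - K x z) \<in> ?R" if x: "x \<in> Xs m n d" for x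
    proof -
      have "T (Nop m n x f) = (\<lambda>z. \<Sum>\<rho>\<in>Pm N. \<beta> x ([], \<rho>) * T (delta (x, \<rho>)) z)"
        unfolding Nopf[OF x] by (rule Tsum[OF finite_Pm]) (use dxI[OF x] FL_delta in auto)
      moreover have "delta (x, \<rho>) = Ur \<rho> (delta (x, id))" if "\<rho> \<in> Pm N" for \<rho>
        using Ur_delta[OF Pm_bij[OF that]] by simp
      ultimately have "(\<lambda>z. T (Nop m n x f) z - K x z)
          = (\<lambda>z. \<Sum>\<rho>\<in>Pm N. \<beta> x ([], \<rho>) * (T (Ur \<rho> (delta (x, id))) z - Ur \<rho> (tt x) z))"
        unfolding K_def by (simp add: sum_subtractf algebra_simps)
      also have "\<dots> \<in> ?R"
        by (rule csub_sum[OF csub_RelL finite_Pm]) (use Comm FL_delta[OF dxI[OF x idP]] in \<open>simp add: tt_def\<close>)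
      finally show ?thesis .
    qed
    have E1: "T (\<lambda>y. (\<Sum>x\<in>Xs m n d. Nop m n x f y) - fact d * f y) \<in> ?R"
      by (rule TR[OF Nlemma_d[OF dN f]])
    have E1': "T (\<lambda>y. (\<Sum>x\<in>Xs m n d. Nop m n x f y) - fact d * f y)
        = (\<lambda>y. (\<Sum>x\<in>Xs m n d. T (Nop m n x f) y) - fact d * T f y)"
    proof -
      have s: "(\<lambda>y. \<Sum>x\<in>Xs m n d. Nop m n x f y) \<in> ?F" by (rule csub_sum'[OF csub_FL finite_Xs NopF])
      have "T (\<lambda>y. (\<Sum>x\<in>Xs m n d. Nop m n x f y) - fact d * f y)
          = (\<lambda>y. T (\<lambda>y. \<Sum>x\<in>Xs m n d. Nop m n x f y) y - T (\<lambda>y. fact d * f y) y)"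
        by (rule Tdiff[OF s FL_scale[OF f]])
      also have "T (\<lambda>y. \<Sum>x\<in>Xs m n d. Nop m n x f y) = (\<lambda>y. \<Sum>x\<in>Xs m n d. T (Nop m n x f) y)"
      proof -
        have "T (\<lambda>y. \<Sum>x\<in>Xs m n d. 1 * Nop m n x f y) = (\<lambda>y. \<Sum>x\<in>Xs m n d. 1 * T (Nop m n x f) y)"
          by (rule Tsum[OF finite_Xs NopF])
        then show ?thesis by simp
      qed
      also have "T (\<lambda>y. fact d * f y) = (\<lambda>y. fact d * T f y)"
        using Wendo_props(3)[OF T] f unfolding N_def by blast
      finally show ?thesis .
    qed
    have fd: "(fact d :: complex) \<noteq> 0" by simp
    have "(\<lambda>y. T f y - A f y) = (\<lambda>y. (1 / fact d) * ((\<Sum>x\<in>Xs m n d. (T (Nop m n x f) y - K x y))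
           - ((\<Sum>x\<in>Xs m n d. T (Nop m n x f) y) - fact d * T f y)))"
      unfolding Af using fd
      by (intro ext) (simp add: sum_subtractf sum_distrib_left sum_divide_distrib[symmetric] field_simps)
    also have "\<dots> \<in> ?R"
    proof -
      have s1: "(\<lambda>y. \<Sum>x\<in>Xs m n d. (T (Nop m n x f) y - K x y)) \<in> ?R"
        by (rule csub_sum'[OF csub_RelL finite_Xs D1])
      have s2: "(\<lambda>y. (\<Sum>x\<in>Xs m n d. T (Nop m n x f) y) - fact d * T f y) \<in> ?R"
        using E1 unfolding E1' .
      show ?thesis by (rule csub_scale[OF csub_RelL csub_diff[OF csub_RelL s1 s2]])
    qed
    finally show "(\<lambda>y. T f y - A f y) \<in> ?R" .
  qed
  then show ?thesis using AA by blast
qed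


definition sc :: "complex \<Rightarrow> (idx \<Rightarrow> vec) \<Rightarrow> (idx \<Rightarrow> vec)" where
  "sc c \<Phi> = (\<lambda>i y. c * \<Phi> i y)"

lemma plus_fun2: "(\<Phi> + \<Psi>) i y = \<Phi> i y + (\<Psi> :: idx \<Rightarrow> vec) i y"
  by (simp add: plus_fun_def)

lemma zero_fun2: "(0 :: idx \<Rightarrow> vec) i y = 0"
  by (simp add: zero_fun_def)

interpretation VS: vector_space sc
  by unfold_locales (simp_all add: sc_def fun_eq_iff plus_fun2 algebra_simps)

interpretation VP: vector_space_pair sc sc ..

lemma proj_exists:
  assumes "VS.subspace Z"
  shows "\<exists>g. (\<forall>x y. g (x + y) = g x + g y) \<and> (\<forall>c x. g (sc c x) = sc c (g x)) \<and> (\<forall>x. g x \<in> Z) \<and> (\<forall>z\<in>Z. g z = z)"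
proof -
  obtain B where B: "B \<subseteq> Z" "VS.independent B" "Z \<subseteq> VS.span B"
    by (rule VS.maximal_independent_subset[of Z]) blast
  obtain g where g: "Vector_Spaces.linear sc sc g" "\<forall>x\<in>B. g x = id x" "range g = VS.span (id ` B)"
    using VP.linear_independent_extend_subspace[OF B(2), of id] by blast
  have spanB: "VS.span B = Z" by (rule VS.span_subspace[OF B(1) B(3) assms])
  have lid: "Vector_Spaces.linear sc sc id" using VS.module_hom_id by (simp add: module_hom_iff_linear)
  have fixz: "g z = z" if "z \<in> Z" for z
    using VP.linear_eq_on[OF g(1) lid, of z B] that g(2) spanB by auto
  have rng: "g x \<in> Z" for x using g(3) spanB by auto
  show ?thesis using g(1) fixz rng unfolding Vector_Spaces.linear_iff by blast
qed


lemma rel_FL: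
  assumes "x \<in> Idx m n N L" "1 \<le> i" "i < L" "L \<le> N"
  shows "rel m i x \<in> FL m n N L"
proof -
  obtain xs \<sigma> where xx: "x = (xs, \<sigma>)" by (cases x)
  have si: "s i permutes {1..N}" using assms by (intro s_permutes) auto
  let ?p = "length xs - i - 1"
  have "set (xs[?p := xs ! Suc ?p, Suc ?p := xs ! ?p]) \<subseteq> {1..m+n}"
    using assms xx by (auto simp: Idx_def dest!: set_update_subset_insert[THEN subsetD] intro: nth_mem)
  then have "delta (xs[?p := xs ! Suc ?p, Suc ?p := xs ! ?p], \<sigma>) \<in> FL m n N L"
    using assms xx by (intro FL_delta) (auto simp: Idx_def)
  moreover have "delta (xs, s i \<circ> \<sigma>) \<in> FL m n N L"
    using assms xx si by (intro FL_delta) (auto simp: Idx_def intro: permutes_compose)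
  ultimately show ?thesis unfolding xx rel_eq by (intro FL_diff FL_scale)
qed

lemma RelL_FL: assumes "r \<in> RelL m n N L" "L \<le> N" shows "r \<in> FL m n N L"
  using RelL_linop[OF linop_id' assms(1) _ csub_FL] rel_FL assms(2) by blast

definition FI :: "nat \<Rightarrow> nat \<Rightarrow> nat \<Rightarrow> nat \<Rightarrow> (idx \<Rightarrow> vec) set" where
  "FI m n d k = {\<Phi>. (\<forall>i. \<Phi> i \<in> FL m n (d+k) d) \<and> (\<forall>i. i \<notin> Idx m n (d+k) d \<longrightarrow> \<Phi> i = (\<lambda>y. 0))}"

definition Zs :: "nat \<Rightarrow> nat \<Rightarrow> nat \<Rightarrow> nat \<Rightarrow> (idx \<Rightarrow> vec) set" where
  "Zs m n d k = {\<Phi>. \<Phi> \<in> FI m n d k \<and> (\<exists>b. \<forall>i\<in>Idx m n (d+k) d.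
      (\<lambda>y. \<Phi> i y - R_mult d k b (delta i) y) \<in> RelL m n (d+k) d)}"

definition Ud :: "(nat \<Rightarrow> nat) \<Rightarrow> (idx \<Rightarrow> vec) \<Rightarrow> (idx \<Rightarrow> vec)" where
  "Ud \<rho> \<Phi> = (\<lambda>i. Ur \<rho> (\<Phi> i))"

lemma R_mult_add: "fsupp f \<Longrightarrow> R_mult d k (\<lambda>\<rho>. b1 \<rho> + b2 \<rho>) f = (\<lambda>y. R_mult d k b1 f y + R_mult d k b2 f y)"
  by (simp add: R_mult_Ur ring_distribs sum.distrib)

lemma R_mult_smult: "fsupp f \<Longrightarrow> R_mult d k (\<lambda>\<rho>. c * b \<rho>) f = (\<lambda>y. c * R_mult d k b f y)"
  by (simp add: R_mult_Ur sum_distrib_left mult_ac)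

lemma R_mult_0: "fsupp f \<Longrightarrow> R_mult d k (\<lambda>\<rho>. 0) f = (\<lambda>y. 0)"
  by (simp add: R_mult_Ur)

lemma Zs_subspace: "VS.subspace (Zs m n d k)"
proof (rule VS.subspaceI)
  show "0 \<in> Zs m n d k"
    unfolding Zs_def FI_def
    using csub_zero[OF csub_RelL] R_mult_0[OF FL_fsupp[OF FL_delta]]
    by (auto simp: zero_fun_def intro!: exI[of _ "\<lambda>\<rho>. 0"])
next
  fix x y assume x: "x \<in> Zs m n d k" and y: "y \<in> Zs m n d k"
  obtain b1 where b1: "\<forall>i\<in>Idx m n (d+k) d. (\<lambda>z. x i z - R_mult d k b1 (delta i) z) \<in> RelL m n (d+k) d"
    using x unfolding Zs_def by blast
  obtain b2 where b2: "\<forall>i\<in>Idx m n (d+k) d. (\<lambda>z. y i z - R_mult d k b2 (delta i) z) \<in> RelL m n (d+k) d"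
    using y unfolding Zs_def by blast
  have "(\<lambda>z. (x + y) i z - R_mult d k (\<lambda>\<rho>. b1 \<rho> + b2 \<rho>) (delta i) z) \<in> RelL m n (d+k) d"
    if i: "i \<in> Idx m n (d+k) d" for i
  proof -
    have "(\<lambda>z. (x + y) i z - R_mult d k (\<lambda>\<rho>. b1 \<rho> + b2 \<rho>) (delta i) z)
        = (\<lambda>z. (x i z - R_mult d k b1 (delta i) z) + (y i z - R_mult d k b2 (delta i) z))"
      by (simp add: R_mult_add plus_fun2 algebra_simps)
    then show ?thesis using csub_add[OF csub_RelL] b1 b2 i by simp
  qed
  moreover have "x + y \<in> FI m n d k" using x y unfolding Zs_def FI_def
    by (auto simp: plus_fun_def intro: FL_add)
  ultimately show "x + y \<in> Zs m n d k" unfolding Zs_def by blast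
next
  fix c x assume x: "x \<in> Zs m n d k"
  obtain b1 where b1: "\<forall>i\<in>Idx m n (d+k) d. (\<lambda>z. x i z - R_mult d k b1 (delta i) z) \<in> RelL m n (d+k) d"
    using x unfolding Zs_def by blast
  have "(\<lambda>z. sc c x i z - R_mult d k (\<lambda>\<rho>. c * b1 \<rho>) (delta i) z) \<in> RelL m n (d+k) d"
    if i: "i \<in> Idx m n (d+k) d" for i
  proof -
    have "(\<lambda>z. sc c x i z - R_mult d k (\<lambda>\<rho>. c * b1 \<rho>) (delta i) z)
        = (\<lambda>z. c * (x i z - R_mult d k b1 (delta i) z))"
      by (simp add: R_mult_smult sc_def algebra_simps)
    then show ?thesis using csub_scale[OF csub_RelL] b1 i by simp
  qed
  moreover have "sc c x \<in> FI m n d k" using x unfolding Zs_def FI_def sc_def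
    by (auto intro: FL_scale)
  ultimately show "sc c x \<in> Zs m n d k" unfolding Zs_def by blast
qed

lemma Ur_RelL: "\<rho> \<in> Pm (d+k) \<Longrightarrow> r \<in> RelL m n (d+k) L \<Longrightarrow> Ur \<rho> r \<in> RelL m n (d+k) L"
  using R_mult_RelL[of r m n d k L "\<lambda>\<rho>'. if \<rho>' = \<rho> then 1 else 0"] R_mult_ind[OF RelL_fsupp] by simp

lemma Ur_R_mult:
  assumes "\<rho> \<in> Pm (d+k)" "fsupp f"
  shows "Ur \<rho> (R_mult d k b f) = R_mult d k (\<lambda>\<sigma>. b (\<sigma> \<circ> inv \<rho>)) f"
proof -
  have b: "bij \<rho>" using Pm_bij[OF assms(1)] .
  have "Ur \<rho> (R_mult d k b f) = (\<lambda>y. \<Sum>\<tau>\<in>Pm (d+k). b \<tau> * Ur (\<tau> \<circ> \<rho>) f y)"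
    unfolding R_mult_Ur[OF assms(2)] Ur_sum Ur_scale
    by (intro ext sum.cong refl) (simp add: Ur_Ur[OF b Pm_bij])
  also have "\<dots> = (\<lambda>y. \<Sum>\<sigma>\<in>Pm (d+k). b (\<sigma> \<circ> inv \<rho>) * Ur \<sigma> f y)"
  proof (intro ext)
    fix y
    show "(\<Sum>\<tau>\<in>Pm (d+k). b \<tau> * Ur (\<tau> \<circ> \<rho>) f y) = (\<Sum>\<sigma>\<in>Pm (d+k). b (\<sigma> \<circ> inv \<rho>) * Ur \<sigma> f y)"
    proof (rule sum.reindex_bij_witness[of _ "\<lambda>\<sigma>. \<sigma> \<circ> inv \<rho>" "\<lambda>\<tau>. \<tau> \<circ> \<rho>"])
      fix \<tau> assume "\<tau> \<in> Pm (d+k)"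
      then show "\<tau> \<circ> \<rho> \<circ> inv \<rho> = \<tau>" "\<tau> \<circ> \<rho> \<in> Pm (d+k)"
        using assms(1) unfolding Pm_def by (auto simp: comp_assoc permutes_inv_o intro: permutes_compose)
      show "b (\<tau> \<circ> \<rho> \<circ> inv \<rho>) * Ur (\<tau> \<circ> \<rho>) f y = b \<tau> * Ur (\<tau> \<circ> \<rho>) f y"
        using assms(1) unfolding Pm_def by (simp add: comp_assoc permutes_inv_o)
    next
      fix \<sigma> assume "\<sigma> \<in> Pm (d+k)"
      then show "\<sigma> \<circ> inv \<rho> \<circ> \<rho> = \<sigma>" "\<sigma> \<circ> inv \<rho> \<in> Pm (d+k)"
        using assms(1) unfolding Pm_def by (auto simp: comp_assoc permutes_inv_o intro: permutes_compose permutes_inv)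
    qed
  qed
  also have "\<dots> = R_mult d k (\<lambda>\<sigma>. b (\<sigma> \<circ> inv \<rho>)) f" unfolding R_mult_Ur[OF assms(2)] ..
  finally show ?thesis .
qed

lemma Zs_Ud: assumes "\<Phi> \<in> Zs m n d k" "\<rho> \<in> Pm (d+k)" shows "Ud \<rho> \<Phi> \<in> Zs m n d k"
proof -
  obtain b where b: "\<forall>i\<in>Idx m n (d+k) d. (\<lambda>z. \<Phi> i z - R_mult d k b (delta i) z) \<in> RelL m n (d+k) d"
    and FI: "\<Phi> \<in> FI m n d k"
    using assms(1) unfolding Zs_def by blast
  have "Ud \<rho> \<Phi> \<in> FI m n d k"
    using FI assms(2) unfolding FI_def Ud_def by (auto intro: FL_Ur)
  moreover have "(\<lambda>z. Ud \<rho> \<Phi> i z - R_mult d k (\<lambda>\<sigma>. b (\<sigma> \<circ> inv \<rho>)) (delta i) z) \<in> RelL m n (d+k) d"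
    if i: "i \<in> Idx m n (d+k) d" for i
  proof -
    have "(\<lambda>z. Ud \<rho> \<Phi> i z - R_mult d k (\<lambda>\<sigma>. b (\<sigma> \<circ> inv \<rho>)) (delta i) z)
        = Ur \<rho> (\<lambda>z. \<Phi> i z - R_mult d k b (delta i) z)"
      unfolding Ud_def Ur_diff Ur_R_mult[OF assms(2) fsupp_delta] ..
    then show ?thesis using Ur_RelL[OF assms(2)] b i by simp
  qed
  ultimately show ?thesis unfolding Zs_def by blast
qed

lemma Zs_FI: "\<Phi> \<in> Zs m n d k \<Longrightarrow> \<Phi> \<in> FI m n d k" unfolding Zs_def by blast

lemma Ud_add: "Ud \<rho> (\<lambda>i y. A i y + B i y) = (\<lambda>i y. Ud \<rho> A i y + Ud \<rho> B i y)"
  unfolding Ud_def by (simp add: Ur_add)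

lemma Ud_sc: "Ud \<rho> (sc c A) = sc c (Ud \<rho> A)"
  unfolding Ud_def sc_def by (simp add: Ur_scale)

lemma Ud_Ud: "bij \<rho> \<Longrightarrow> bij \<tau> \<Longrightarrow> Ud \<rho> (Ud \<tau> A) = Ud (\<tau> \<circ> \<rho>) A"
  unfolding Ud_def by (simp add: Ur_Ur)

lemma Ud_sum: "Ud \<rho> (\<lambda>i y. \<Sum>j\<in>J. H j i y) = (\<lambda>i y. \<Sum>j\<in>J. Ud \<rho> (H j) i y)"
  unfolding Ud_def Ur_def by (auto simp: fun_eq_iff)


locale projl =
  fixes m n d k :: nat and g :: "(idx \<Rightarrow> vec) \<Rightarrow> (idx \<Rightarrow> vec)"
  assumes gadd: "\<And>x y. g (x + y) = g x + g y"
    and gsc: "\<And>c x. g (sc c x) = sc c (g x)"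
    and grng: "\<And>x. g x \<in> Zs m n d k"
    and gfix: "\<And>z. z \<in> Zs m n d k \<Longrightarrow> g z = z"
begin

abbreviation "N \<equiv> d + k"
abbreviation "I \<equiv> Idx m n (d+k) d"

definition cP :: complex where "cP = 1 / of_nat (card (Pm N))"

definition P :: "(idx \<Rightarrow> vec) \<Rightarrow> (idx \<Rightarrow> vec)" where
  "P \<Phi> = (\<lambda>i y. cP * (\<Sum>\<rho>\<in>Pm N. Ud (inv \<rho>) (g (Ud \<rho> \<Phi>)) i y))"

lemma gadd': "g (\<lambda>i y. A i y + B i y) = (\<lambda>i y. g A i y + g B i y)"
proof -
  have e: "(\<lambda>i y. A i y + B i y) = A + B" by (simp add: fun_eq_iff plus_fun2)
  show ?thesis unfolding e gadd by (simp add: fun_eq_iff plus_fun2)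
qed

lemma g0: "g (\<lambda>i y. 0) = (\<lambda>i y. 0)"
proof -
  have "sc 0 (\<lambda>i y. 0) = (\<lambda>i y. 0)" by (simp add: sc_def)
  then show ?thesis using gsc[of 0 "\<lambda>i y. 0"] by (simp add: sc_def)
qed

lemma Ud0: "Ud \<rho> (\<lambda>i y. 0) = (\<lambda>i y. 0)" unfolding Ud_def by simp

lemma P_add: "P (\<lambda>i y. A i y + B i y) = (\<lambda>i y. P A i y + P B i y)"
  unfolding P_def Ud_add gadd' by (simp add: sum.distrib ring_distribs)

lemma P_sc: "P (sc c A) = sc c (P A)"
  unfolding P_def Ud_sc gsc by (simp add: sc_def Ud_def Ur_scale sum_distrib_left mult_ac)

lemma P_sc': "P (\<lambda>i y. c * A i y) = (\<lambda>i y. c * P A i y)"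
  using P_sc[of c A] unfolding sc_def .

lemma P0: "P (\<lambda>i y. 0) = (\<lambda>i y. 0)"
  unfolding P_def Ud0 g0 by simp

lemma P_sum: "finite J \<Longrightarrow> P (\<lambda>i y. \<Sum>j\<in>J. H j i y) = (\<lambda>i y. \<Sum>j\<in>J. P (H j) i y)"
proof (induction J rule: finite_induct)
  case empty then show ?case using P0 by simp
next
  case (insert x F)
  have "P (\<lambda>i y. \<Sum>j\<in>insert x F. H j i y) = P (\<lambda>i y. H x i y + (\<lambda>i y. \<Sum>j\<in>F. H j i y) i y)"
    using insert by simp
  also have "\<dots> = (\<lambda>i y. P (H x) i y + P (\<lambda>i y. \<Sum>j\<in>F. H j i y) i y)" by (rule P_add)
  finally show ?case using insert by simp
qed

lemma card_Pm: "card (Pm N) \<noteq> 0"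
proof -
  have "id \<in> Pm N" unfolding Pm_def by (simp add: permutes_id)
  then show ?thesis using finite_Pm[of N] by auto
qed

lemma Zs_sum: "finite S \<Longrightarrow> (\<And>j. j \<in> S \<Longrightarrow> H j \<in> Zs m n d k) \<Longrightarrow> (\<lambda>i y. \<Sum>j\<in>S. H j i y) \<in> Zs m n d k"
proof (induction S rule: finite_induct)
  case empty
  then show ?case using VS.subspace_0[OF Zs_subspace] by (simp add: zero_fun_def)
next
  case (insert x F)
  have "H x + (\<lambda>i y. \<Sum>j\<in>F. H j i y) \<in> Zs m n d k"
    using insert by (intro VS.subspace_add[OF Zs_subspace]) auto
  moreover have "H x + (\<lambda>i y. \<Sum>j\<in>F. H j i y) = (\<lambda>i y. \<Sum>j\<in>insert x F. H j i y)"
    using insert by (simp add: fun_eq_iff plus_fun2)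
  ultimately show ?case by simp
qed

lemma inv_Pm: "\<rho> \<in> Pm N \<Longrightarrow> inv \<rho> \<in> Pm N"
  unfolding Pm_def by (auto intro: permutes_inv)

lemma PZ: "P \<Phi> \<in> Zs m n d k"
proof -
  have "(\<lambda>i y. \<Sum>\<rho>\<in>Pm N. Ud (inv \<rho>) (g (Ud \<rho> \<Phi>)) i y) \<in> Zs m n d k"
    by (rule Zs_sum[OF finite_Pm]) (auto intro: Zs_Ud grng inv_Pm)
  then have "sc cP (\<lambda>i y. \<Sum>\<rho>\<in>Pm N. Ud (inv \<rho>) (g (Ud \<rho> \<Phi>)) i y) \<in> Zs m n d k"
    by (rule VS.subspace_scale[OF Zs_subspace])
  then show ?thesis unfolding P_def sc_def .
qed

lemma Pfix: assumes "\<Phi> \<in> Zs m n d k" shows "P \<Phi> = \<Phi>"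
proof -
  have "Ud (inv \<rho>) (g (Ud \<rho> \<Phi>)) = \<Phi>" if \<rho>: "\<rho> \<in> Pm N" for \<rho>
  proof -
    have "g (Ud \<rho> \<Phi>) = Ud \<rho> \<Phi>" by (rule gfix[OF Zs_Ud[OF assms \<rho>]])
    moreover have "Ud (inv \<rho>) (Ud \<rho> \<Phi>) = Ud (\<rho> \<circ> inv \<rho>) \<Phi>"
      by (rule Ud_Ud) (use \<rho> inv_Pm Pm_bij in auto)
    moreover have "\<rho> \<circ> inv \<rho> = id" using \<rho> unfolding Pm_def by (simp add: permutes_inv_o)
    ultimately show ?thesis by (simp add: Ud_def)
  qed
  then have "P \<Phi> = (\<lambda>i y. cP * (\<Sum>\<rho>\<in>Pm N. \<Phi> i y))" unfolding P_def by simp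
  also have "\<dots> = \<Phi>" using card_Pm by (simp add: cP_def fun_eq_iff)
  finally show ?thesis .
qed

lemma Pequiv: assumes \<tau>: "\<tau> \<in> Pm N" shows "P (Ud \<tau> \<Phi>) = Ud \<tau> (P \<Phi>)"
proof -
  have bt: "bij \<tau>" using Pm_bij[OF \<tau>] .
  have "(\<Sum>\<rho>\<in>Pm N. Ud (inv \<rho>) (g (Ud \<rho> (Ud \<tau> \<Phi>))) i y)
      = (\<Sum>\<sigma>\<in>Pm N. Ud \<tau> (Ud (inv \<sigma>) (g (Ud \<sigma> \<Phi>))) i y)" for i y
  proof (rule sum.reindex_bij_witness[of _ "\<lambda>\<sigma>. inv \<tau> \<circ> \<sigma>" "\<lambda>\<rho>. \<tau> \<circ> \<rho>"])
    fix \<rho> assume \<rho>: "\<rho> \<in> Pm N"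
    show "inv \<tau> \<circ> (\<tau> \<circ> \<rho>) = \<rho>" using \<tau> unfolding Pm_def by (simp add: comp_assoc[symmetric] permutes_inv_o)
    show "\<tau> \<circ> \<rho> \<in> Pm N" using \<tau> \<rho> unfolding Pm_def by (auto intro: permutes_compose)
    have b\<rho>: "bij \<rho>" using Pm_bij[OF \<rho>] .
    have e1: "Ud \<rho> (Ud \<tau> \<Phi>) = Ud (\<tau> \<circ> \<rho>) \<Phi>" by (rule Ud_Ud[OF b\<rho> bt])
    have e2: "Ud \<tau> (Ud (inv (\<tau> \<circ> \<rho>)) X) = Ud (inv \<rho>) X" for X
    proof -
      have "bij (inv (\<tau> \<circ> \<rho>))" using bt b\<rho> by (simp add: bij_comp bij_imp_bij_inv)
      then have "Ud \<tau> (Ud (inv (\<tau> \<circ> \<rho>)) X) = Ud (inv (\<tau> \<circ> \<rho>) \<circ> \<tau>) X" by (rule Ud_Ud[OF bt])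
      moreover have "inv (\<tau> \<circ> \<rho>) \<circ> \<tau> = inv \<rho>"
        using bt b\<rho> by (simp add: o_inv_distrib comp_assoc bij_is_inj inv_o_cancel)
      ultimately show ?thesis by simp
    qed
    show "Ud \<tau> (Ud (inv (\<tau> \<circ> \<rho>)) (g (Ud (\<tau> \<circ> \<rho>) \<Phi>))) i y = Ud (inv \<rho>) (g (Ud \<rho> (Ud \<tau> \<Phi>))) i y"
      unfolding e1 e2 ..
  next
    fix \<sigma> assume \<sigma>: "\<sigma> \<in> Pm N"
    show "\<tau> \<circ> (inv \<tau> \<circ> \<sigma>) = \<sigma>" using \<tau> unfolding Pm_def by (simp add: comp_assoc[symmetric] permutes_inv_o)
    show "inv \<tau> \<circ> \<sigma> \<in> Pm N" using \<tau> \<sigma> unfolding Pm_def by (auto intro: permutes_compose permutes_inv)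
  qed
  then have "P (Ud \<tau> \<Phi>) = (\<lambda>i y. cP * (\<Sum>\<sigma>\<in>Pm N. Ud \<tau> (Ud (inv \<sigma>) (g (Ud \<sigma> \<Phi>))) i y))"
    unfolding P_def by simp
  also have "\<dots> = Ud \<tau> (P \<Phi>)"
    unfolding P_def Ud_def Ur_scale Ur_sum by simp
  finally show ?thesis .
qed

definition E :: "idx \<Rightarrow> vec \<Rightarrow> (idx \<Rightarrow> vec)" where
  "E j f = (\<lambda>i. if i = j then f else (\<lambda>y. 0))"

definition Pc :: "idx \<Rightarrow> idx \<Rightarrow> vec \<Rightarrow> vec" where
  "Pc i j f = P (E j f) i"

lemma Pc_FL: "Pc i j f \<in> FL m n N d"
  using Zs_FI[OF PZ] unfolding Pc_def FI_def by blast

lemma linop_Pc: "linop (Pc i j)"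
  unfolding linop_def
proof (intro conjI allI impI)
  fix f show "fsupp (Pc i j f)" by (rule FL_fsupp[OF Pc_FL])
next
  fix f h :: vec
  have "E j (\<lambda>y. f y + h y) = (\<lambda>i y. E j f i y + E j h i y)" unfolding E_def by auto
  then show "Pc i j (\<lambda>y. f y + h y) = (\<lambda>y. Pc i j f y + Pc i j h y)"
    unfolding Pc_def using P_add by simp
next
  fix f :: vec and c
  have "E j (\<lambda>y. c * f y) = (\<lambda>i y. c * E j f i y)" unfolding E_def by auto
  then show "Pc i j (\<lambda>y. c * f y) = (\<lambda>y. c * Pc i j f y)"
    unfolding Pc_def using P_sc' by simp
qed

lemma Ucomm_Pc: "Ucomm N (Pc i j)"
  unfolding Ucomm_def
proof (intro allI impI)
  fix \<rho> f assume \<rho>: "\<rho> \<in> Pm N"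
  have "E j (Ur \<rho> f) = Ud \<rho> (E j f)" unfolding E_def Ud_def by auto
  then show "Pc i j (Ur \<rho> f) = Ur \<rho> (Pc i j f)"
    unfolding Pc_def using Pequiv[OF \<rho>] by (simp add: Ud_def)
qed

lemma E_Zs: assumes "j \<in> I" "r \<in> RelL m n N d" shows "E j r \<in> Zs m n d k"
proof -
  have rF: "r \<in> FL m n N d" by (rule RelL_FL[OF assms(2)]) simp
  have "E j r \<in> FI m n d k" using rF assms(1) unfolding FI_def E_def by auto
  moreover have "(\<lambda>y. E j r i y - R_mult d k (\<lambda>\<rho>. 0) (delta i) y) \<in> RelL m n N d" for i
    using R_mult_0[OF fsupp_delta] assms(2) csub_zero[OF csub_RelL] unfolding E_def by auto
  ultimately show ?thesis unfolding Zs_def by blast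
qed

lemma Pc_Wendo: assumes "j \<in> I" shows "W_endo m n d k (Pc i j)"
proof (rule W_endo_linop[OF linop_Pc])
  show "Pc i j f \<in> FL m n N d" for f by (rule Pc_FL)
  fix r assume r: "r \<in> RelL m n N d"
  have "Pc i j r = E j r i" unfolding Pc_def using Pfix[OF E_Zs[OF assms r]] by simp
  then show "Pc i j r \<in> RelL m n N d" using r csub_zero[OF csub_RelL] unfolding E_def by auto
qed

lemma Pc_comm: "W_commute m n d k (Pc i j) (R_mult d k c)"
  by (rule W_commute_eq) (use Ucomm_R_mult[OF linop_Pc Ucomm_Pc] FL_fsupp in auto)

end


context projl begin

lemma sum_E_apply:
  assumes "finite J"
  shows "(\<Sum>j\<in>J. E j (h j) i y) = (if i \<in> J then h i y else 0)"
proof -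
  have "(\<Sum>j\<in>J. E j (h j) i y) = (\<Sum>j\<in>J. if j = i then h i y else 0)"
    by (rule sum.cong) (auto simp: E_def)
  then show ?thesis using assms by (simp add: sum.delta)
qed


lemma part4_loc:
  assumes T: "W_endo m n d k T" and C: "\<forall>A\<in>A_alg m n d k. W_commute m n d k T A"
  shows "\<exists>c. W_eq m n d k T (R_mult d k c)"
proof -
  let ?F = "FL m n N d" and ?R = "RelL m n N d"
  have TF: "f \<in> ?F \<Longrightarrow> T f \<in> ?F" for f using Wendo_props(1)[OF T] .
  have TR: "r \<in> ?R \<Longrightarrow> T r \<in> ?R" for r using Wendo_props(4)[OF T] .
  have TP: "(\<lambda>y. T (Pc i j f) y - Pc i j (T f) y) \<in> ?R" if j: "j \<in> I" and f: "f \<in> ?F" for i j f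
  proof -
    have "\<forall>c. W_commute m n d k (Pc i j) (R_mult d k c)" using Pc_comm by blast
    then obtain A where A: "A \<in> A_alg m n d k" "W_eq m n d k (Pc i j) A"
      using part2_lemma[OF Pc_Wendo[OF j]] by blast
    have AF: "g \<in> ?F \<Longrightarrow> A g \<in> ?F" for g by (rule alg_props(2)[OF A(1)])
    have eq: "\<And>g. g \<in> ?F \<Longrightarrow> (\<lambda>y. Pc i j g y - A g y) \<in> ?R"
      using A(2) unfolding W_eq_def W_free_FL W_rel_RelL by blast
    have cm: "\<And>g. g \<in> ?F \<Longrightarrow> (\<lambda>y. T (A g) y - A (T g) y) \<in> ?R"
      using C A(1) unfolding W_commute_def W_eq_def W_free_FL W_rel_RelL by auto
    have 1: "(\<lambda>y. T (Pc i j f) y - T (A f) y) \<in> ?R"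
      using TR[OF eq[OF f]] Wendo_diff[OF T Pc_FL AF[OF f]] by simp
    have 2: "(\<lambda>y. T (A f) y - A (T f) y) \<in> ?R" by (rule cm[OF f])
    have 3: "(\<lambda>y. Pc i j (T f) y - A (T f) y) \<in> ?R" by (rule eq[OF TF[OF f]])
    have "(\<lambda>y. T (Pc i j f) y - Pc i j (T f) y) =
        (\<lambda>y. ((T (Pc i j f) y - T (A f) y) + (T (A f) y - A (T f) y)) - (Pc i j (T f) y - A (T f) y))"
      by (simp add: algebra_simps)
    also have "\<dots> \<in> ?R"
      by (rule csub_diff[OF csub_RelL csub_add[OF csub_RelL 1 2] 3])
    finally show ?thesis .
  qed
  define Q where "Q = (\<lambda>i y. \<Sum>j\<in>I. E j (delta j) i y)"
  have idP: "id \<in> Pm N" unfolding Pm_def by (simp add: permutes_id)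
  have QZ: "Q \<in> Zs m n d k"
  proof -
    have Qe: "Q i = (if i \<in> I then delta i else (\<lambda>y. 0))" for i
      unfolding Q_def by (auto simp: fun_eq_iff sum_E_apply[OF finite_Idx])
    have "Q \<in> FI m n d k" unfolding FI_def using Qe FL_delta by auto
    moreover have "(\<lambda>y. Q i y - R_mult d k (\<lambda>\<rho>'. if \<rho>' = id then 1 else 0) (delta i) y) \<in> ?R" if "i \<in> I" for i
      using that Qe R_mult_ind[OF fsupp_delta idP] csub_zero[OF csub_RelL] by simp
    ultimately show ?thesis unfolding Zs_def by blast
  qed
  have PQ: "P Q = (\<lambda>i y. \<Sum>j\<in>I. Pc i j (delta j) y)"
    unfolding Q_def P_sum[OF finite_Idx] Pc_def ..
  have dec: "delta i = (\<lambda>y. \<Sum>j\<in>I. Pc i j (delta j) y)" if "i \<in> I" for i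
  proof -
    have "Q i = delta i" using that unfolding Q_def by (auto simp: fun_eq_iff sum_E_apply[OF finite_Idx])
    then show ?thesis using Pfix[OF QZ] PQ by metis
  qed
  define \<Psi> where "\<Psi> = (\<lambda>i y. \<Sum>j\<in>I. E j (T (delta j)) i y)"
  have P\<Psi>: "P \<Psi> i = (\<lambda>y. \<Sum>j\<in>I. Pc i j (T (delta j)) y)" for i
    unfolding \<Psi>_def P_sum[OF finite_Idx] Pc_def ..
  obtain b where b: "\<forall>i\<in>I. (\<lambda>y. P \<Psi> i y - R_mult d k b (delta i) y) \<in> ?R"
    using PZ[of \<Psi>] unfolding Zs_def by blast
  have Td: "(\<lambda>y. T (delta i) y - R_mult d k b (delta i) y) \<in> ?R" if i: "i \<in> I" for i
  proof -
    have "T (delta i) = T (\<lambda>y. \<Sum>j\<in>I. 1 * Pc i j (delta j) y)" using dec[OF i] by simp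
    also have "\<dots> = (\<lambda>y. \<Sum>j\<in>I. 1 * T (Pc i j (delta j)) y)"
      by (rule Wendo_sum[OF T finite_Idx Pc_FL])
    finally have "T (delta i) = (\<lambda>y. \<Sum>j\<in>I. T (Pc i j (delta j)) y)" by simp
    then have "(\<lambda>y. T (delta i) y - R_mult d k b (delta i) y)
        = (\<lambda>y. (\<Sum>j\<in>I. (T (Pc i j (delta j)) y - Pc i j (T (delta j)) y)) + (P \<Psi> i y - R_mult d k b (delta i) y))"
      unfolding P\<Psi> by (simp add: sum_subtractf)
    also have "\<dots> \<in> ?R"
      by (rule csub_add[OF csub_RelL csub_sum'[OF csub_RelL finite_Idx]])
         (use TP FL_delta b i in auto)
    finally show ?thesis .
  qed
  have "W_eq m n d k T (R_mult d k b)"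
    unfolding W_eq_def W_free_FL W_rel_RelL
  proof
    fix f assume f: "f \<in> ?F"
    have fd: "f = (\<lambda>y. \<Sum>i\<in>I. f i * delta i y)" by (rule FL_decomp[OF f])
    have "T f = (\<lambda>y. \<Sum>i\<in>I. f i * T (delta i) y)"
      by (subst fd, rule Wendo_sum[OF T finite_Idx]) (simp add: FL_delta)
    moreover have "R_mult d k b f = (\<lambda>y. \<Sum>i\<in>I. f i * R_mult d k b (delta i) y)"
      by (subst fd, rule linop_sum[OF linop_R_mult finite_Idx]) simp
    ultimately have "(\<lambda>y. T f y - R_mult d k b f y) = (\<lambda>y. \<Sum>i\<in>I. f i * (T (delta i) y - R_mult d k b (delta i) y))"
      by (simp add: sum_subtractf algebra_simps)
    also have "\<dots> \<in> ?R" by (rule csub_sum[OF csub_RelL finite_Idx Td])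
    finally show "(\<lambda>y. T f y - R_mult d k b f y) \<in> ?R" .
  qed
  then show ?thesis by blast
qed

end

lemma part4:
  assumes "W_endo m n d k T" "\<forall>A\<in>A_alg m n d k. W_commute m n d k T A"
  shows "\<exists>c. W_eq m n d k T (R_mult d k c)"
proof -
  obtain g where g: "\<forall>x y. g (x + y) = g x + g y" "\<forall>c x. g (sc c x) = sc c (g x)"
    "\<forall>x. g x \<in> Zs m n d k" "\<forall>z\<in>Zs m n d k. g z = z"
    using proj_exists[OF Zs_subspace] by blast
  interpret projl m n d k g by unfold_locales (use g in auto)
  show ?thesis by (rule part4_loc[OF assms])
qed

theorem theorem4p1:
  fixes m n d k :: nat
  assumes "1 \<le> m" and "1 \<le> n" and "1 \<le> d" and "k \<le> d"
  shows "(\<forall>A\<in>A_alg m n d k. W_endo m n d k A \<and> (\<forall>c. W_commute m n d k A (R_mult d k c)))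
       \<and> (\<forall>T. W_endo m n d k T \<and> (\<forall>c. W_commute m n d k T (R_mult d k c))
              \<longrightarrow> (\<exists>A\<in>A_alg m n d k. W_eq m n d k T A))
       \<and> (\<forall>c. W_endo m n d k (R_mult d k c) \<and> (\<forall>A\<in>A_alg m n d k. W_commute m n d k (R_mult d k c) A))
       \<and> (\<forall>T. W_endo m n d k T \<and> (\<forall>A\<in>A_alg m n d k. W_commute m n d k T A)
              \<longrightarrow> (\<exists>c. W_eq m n d k T (R_mult d k c)))"
proof -
  have 2: "\<forall>T. W_endo m n d k T \<and> (\<forall>c. W_commute m n d k T (R_mult d k c))
              \<longrightarrow> (\<exists>A\<in>A_alg m n d k. W_eq m n d k T A)" using part2_lemma by blast
  have 4: "\<forall>T. W_endo m n d k T \<and> (\<forall>A\<in>A_alg m n d k. W_commute m n d k T A)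
              \<longrightarrow> (\<exists>c. W_eq m n d k T (R_mult d k c))" using part4 by blast
  show ?thesis by (intro conjI part1 2 part3 4)
qed


end
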